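(* In the quantized jammed MIMO model described in the context, fix $H$, $J$, $N_0$, assume $w\sim\mathcal{CN}(0,\rho I_I)$, $n\sim\mathcal{CN}(0,N_0I_B)$, and that the entries $s_u$ of $s$ are uncorrelated (i.e. $\mathbb{E}[s_us_v^*]=0$ for $u\ne v$) with $\mathbb{E}[|s_u|^2]\le1$. Let the number of quantization levels $M=M(\rho)\ge2$ be a function of the jammer power $\rho$ (the quantizers and the distribution of $s$ may also depend on $\rho$). If all rows of $J$ are nonzero and $\lim_{\rho\to\infty}I(q;s)>0$, then $M\succeq\sqrt{\rho}$, i.e., it is not the case that there exists $\epsilon>0$ with $\lim_{\rho\to\infty}M(\rho)\,\rho^{\epsilon-1/2}=0$.
   Context: Let $B,U,I$ be positive integers, $H\in\mathbb{C}^{B\times U}$ and $J\in\mathbb{C}^{B\times I}$ fixed matrices, and $N_0>0$. Let $s\in\mathbb{C}^U$, $w\in\mathbb{C}^I$, $n\in\mathbb{C}^B$ be mutually independent random vectors and $y=Hs+Jw+n$. Let $\mathcal{C}=\{1,\dots,B\}\times\{\mathfrak{r},\mathfrak{i}\}$, and for $v\in\mathbb{C}^B$ write $v_{(b,\mathfrak{r})}=\mathrm{Re}(v_b)$, $v_{(b,\mathfrak{i})}=\mathrm{Im}(v_b)$. For each $c\in\mathcal{C}$, $Q_c:\mathbb{R}\to\mathfrak{Q}_c$ is a scalar quantizer with $M=|\mathfrak{Q}_c|\ge2$ levels (partitioning $\mathbb{R}$ into $M$ intervals, separated by at most $M-1$ boundary points, each mapped to a distinct level; possibly non-uniform and different for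 each $c$), and $q=(Q_c(y_c))_{c\in\mathcal{C}}$. For functions $f,g$, $f\prec g$ means there exists $\epsilon>0$ with $\lim_{x\to\infty}\frac{f(x)}{g(x)}x^{\epsilon}=0$, and $f\succeq g$ is its logical negation. *)

theory Defs
  imports "HOL-Probability.Probability"
begin

text \<open>Real / imaginary part selector for the index set C = {1..B} x {r,i}.\<close>
datatype reim = ReP | ImP

definition reim_comp :: "complex ^ 'b \<Rightarrow> 'b \<times> reim \<Rightarrow> real" where
  "reim_comp v c = (case snd c of ReP \<Rightarrow> Re (v $ fst c) | ImP \<Rightarrow> Im (v $ fst c))"

definition is_quantizer :: "(real \<Rightarrow> real) \<Rightarrow> nat \<Rightarrow> bool" where
  "is_quantizer Q m \<longleftrightarrow> finite (range Q) \<and> card (range Q) = m \<and>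
     (\<forall>v \<in> range Q. is_interval (Q -` {v}))"

text \<open>Density (w.r.t. Lebesgue measure on C^n = R^(2n)) of the circularly symmetric
  complex Gaussian CN(0, sigma2 I_n).\<close>
definition cn_density :: "real \<Rightarrow> complex ^ 'n \<Rightarrow> real" where
  "cn_density sigma2 x = exp (- (norm x)\<^sup>2 / sigma2) / (pi * sigma2) ^ CARD('n)"

definition rx_signal :: "complex ^ 'u ^ 'b \<Rightarrow> complex ^ 'i ^ 'b \<Rightarrow> complex ^ 'u \<Rightarrow> complex ^ 'i
    \<Rightarrow> complex ^ 'b \<Rightarrow> complex ^ 'b" where
  "rx_signal H J s w n = H *v s + J *v w + n"

definition quantize :: "('b \<times> reim \<Rightarrow> real \<Rightarrow> real) \<Rightarrow> complex ^ 'b \<Rightarrow> 'b \<times> reim \<Rightarrow> real" where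
  "quantize Q y = (\<lambda>c. Q c (reim_comp y c))"

definition indep_rv :: "'a measure \<Rightarrow> ('a \<Rightarrow> 'x::topological_space) \<Rightarrow> ('a \<Rightarrow> 'y::topological_space) \<Rightarrow> bool" where
  "indep_rv M X Y \<longleftrightarrow> X \<in> borel_measurable M \<and> Y \<in> borel_measurable M \<and>
     (\<forall>A \<in> sets borel. \<forall>B \<in> sets borel.
        measure M {\<omega> \<in> space M. X \<omega> \<in> A \<and> Y \<omega> \<in> B}
          = measure M {\<omega> \<in> space M. X \<omega> \<in> A} * measure M {\<omega> \<in> space M. Y \<omega> \<in> B})"

end

theory Submission
  imports Defs "HOL-Real_Asymp.Real_Asymp"
begin

lemma eta_aux1:
  fixes a b :: real
  assumes "0 \<le> a" "a \<le> b" "b \<le> 1"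
  shows "b * ln b - a * ln a \<le> b - a"
proof (cases "a = 0")
  case True
  have "b * ln b \<le> 0" using assms by (cases "b = 0") (auto simp: mult_nonneg_nonpos)
  then show ?thesis using True assms by simp
next
  case False
  then have a0: "a > 0" using assms by auto
  then have b0: "b > 0" using assms by auto
  have "b * ln b - a * ln a = a * ln (b / a) + (b - a) * ln b"
    using a0 b0 by (simp add: ln_div algebra_simps)
  also have "a * ln (b / a) \<le> a * (b / a - 1)"
    using a0 b0 ln_le_minus_one[of "b/a"] by (intro mult_left_mono) auto
  also have "(b - a) * ln b \<le> 0" using assms b0 by (intro mult_nonneg_nonpos) auto
  finally have "b * ln b - a * ln a \<le> a * (b / a - 1)" by simp
  moreover have "a * (b / a - 1) = b - a" using a0 by (simp add: field_simps)
  ultimately show ?thesis by simp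
qed

lemma eta_aux2:
  fixes a b :: real
  assumes "0 \<le> a" "a \<le> b"
  shows "a * ln a - b * ln b \<le> - ((b - a) * ln (b - a))"
proof -
  consider "a = 0" | "a = b" | "0 < a" "a < b" using assms by linarith
  then show ?thesis
  proof cases
    case 3
    have "a * ln a \<le> a * ln b" using 3 by (intro mult_left_mono) auto
    moreover have "(b - a) * ln (b - a) \<le> (b - a) * ln b" using 3 by (intro mult_left_mono) auto
    ultimately show ?thesis by (simp add: algebra_simps)
  qed auto
qed

lemma xlnx_tangent:
  fixes d \<tau> :: real
  assumes "0 \<le> d" "0 < \<tau>"
  shows "- (d * ln d) \<le> \<tau> - d - d * ln \<tau>"
proof (cases "d = 0")
  case False
  then have d0: "d > 0" using assms by auto
  have "ln (\<tau> / d) \<le> \<tau> / d - 1" using d0 assms by (intro ln_le_minus_one) auto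
  then have "d * ln (\<tau> / d) \<le> d * (\<tau> / d - 1)" using d0 by (intro mult_left_mono) auto
  moreover have "d * (\<tau> / d - 1) = \<tau> - d" using d0 by (simp add: field_simps)
  moreover have "ln (\<tau> / d) = ln \<tau> - ln d" using d0 assms by (simp add: ln_div)
  ultimately show ?thesis by (simp add: algebra_simps)
qed (use assms in auto)

lemma eta_bound:
  fixes a b \<tau> :: real
  assumes "0 \<le> a" "a \<le> 1" "0 \<le> b" "b \<le> 1" "0 < \<tau>"
  shows "\<bar>a * ln a - b * ln b\<bar> \<le> \<tau> - \<bar>a - b\<bar> * ln \<tau>"
proof -
  have main: "\<bar>x * ln x - y * ln y\<bar> \<le> \<tau> - (y - x) * ln \<tau>" if "0 \<le> x" "x \<le> y" "y \<le> 1" for x y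
  proof -
    have t: "- ((y - x) * ln (y - x)) \<le> \<tau> - (y - x) - (y - x) * ln \<tau>"
      using xlnx_tangent[of "y - x" \<tau>] that assms by auto
    have "(y - x) * (1 + ln \<tau>) \<le> \<tau>"
    proof (cases "1 + ln \<tau> \<le> 0")
      case True then show ?thesis using that assms by (smt (verit) mult_nonneg_nonpos)
    next
      case False
      then have "(y - x) * (1 + ln \<tau>) \<le> 1 * (1 + ln \<tau>)" using that by (intro mult_right_mono) auto
      also have "\<dots> \<le> \<tau>" using ln_le_minus_one[of \<tau>] assms by simp
      finally show ?thesis .
    qed
    then have "y - x \<le> \<tau> - (y - x) * ln \<tau>" by (simp add: algebra_simps)
    then show ?thesis using eta_aux1[of x y] eta_aux2[of x y] t that by linarith
  qed
  show ?thesis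
  proof (cases "a \<le> b")
    case True then show ?thesis using main[of a b] assms by simp
  next
    case False then show ?thesis using main[of b a] assms by (simp add: abs_minus_commute)
  qed
qed


lemma quant_step_pos:
  fixes Q :: "real \<Rightarrow> real"
  assumes "is_quantizer Q m" "\<delta> > 0" "Q (t + \<delta>) \<noteq> Q t"
  shows "\<bar>t - Sup (Q -` {Q t})\<bar> \<le> \<delta>"
proof -
  let ?I = "Q -` {Q t}"
  have iv: "is_interval ?I" using assms(1) unfolding is_quantizer_def by auto
  have tI: "t \<in> ?I" by simp
  have lt: "y < t + \<delta>" if "y \<in> ?I" for y
  proof (rule ccontr)
    assume "\<not> y < t + \<delta>"
    then have "t + \<delta> \<le> y" by simp
    moreover have "t \<le> t + \<delta>" using assms(2) by simp
    ultimately have "t + \<delta> \<in> ?I" using iv tI that unfolding is_interval_1 by blast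
    then show False using assms(3) by simp
  qed
  have bdd: "bdd_above ?I" using lt by (meson bdd_above.I less_eq_real_def)
  have "t \<le> Sup ?I" using tI bdd by (rule cSup_upper)
  moreover have "Sup ?I \<le> t + \<delta>" using tI lt by (intro cSup_least) (auto intro: less_imp_le)
  ultimately show ?thesis by simp
qed

lemma quant_thresh:
  fixes Q :: "real \<Rightarrow> real"
  assumes "is_quantizer Q m"
  shows "\<exists>T. finite T \<and> card T \<le> m \<and> (\<forall>t \<delta>. Q (t + \<delta>) \<noteq> Q t \<longrightarrow> (\<exists>e\<in>T. \<bar>t - e\<bar> \<le> 2 * \<bar>\<delta>\<bar>))"
proof -
  define T where "T = (\<lambda>v. Sup (Q -` {v})) ` range Q"
  have fin: "finite (range Q)" "card (range Q) = m" using assms unfolding is_quantizer_def by auto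
  have "finite T" unfolding T_def using fin by simp
  moreover have "card T \<le> m" unfolding T_def using fin card_image_le by metis
  moreover have "\<exists>e\<in>T. \<bar>t - e\<bar> \<le> 2 * \<bar>\<delta>\<bar>" if ne: "Q (t + \<delta>) \<noteq> Q t" for t \<delta>
  proof (cases "\<delta> > 0")
    case True
    then have "\<bar>t - Sup (Q -` {Q t})\<bar> \<le> \<delta>" using quant_step_pos[OF assms True ne] by simp
    then show ?thesis unfolding T_def using True by (intro bexI[of _ "Sup (Q -` {Q t})"]) auto
  next
    case False
    then have d: "\<delta> < 0" using ne by (cases "\<delta> = 0") auto
    let ?u = "t + \<delta>"
    have ne': "Q (?u + (- \<delta>)) \<noteq> Q ?u" using ne by simp
    have "\<bar>?u - Sup (Q -` {Q ?u})\<bar> \<le> - \<delta>" using quant_step_pos[OF assms _ ne'] d by simp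
    then have "\<bar>t - Sup (Q -` {Q ?u})\<bar> \<le> 2 * \<bar>\<delta>\<bar>" using d by linarith
    then show ?thesis unfolding T_def by (intro bexI[of _ "Sup (Q -` {Q ?u})"]) auto
  qed
  ultimately show ?thesis by blast
qed


lemma cn_density_meas[measurable]: "(\<lambda>x. cn_density \<sigma> (x::complex^'n)) \<in> borel_measurable borel"
  unfolding cn_density_def by measurable

lemma cn_density_nonneg: "\<sigma> > 0 \<Longrightarrow> cn_density \<sigma> x \<ge> 0"
  unfolding cn_density_def by simp

lemma lborel_shift_nn:
  fixes c :: "'a::euclidean_space"
  assumes [measurable]: "g \<in> borel_measurable borel"
  shows "(\<integral>\<^sup>+x. g x \<partial>lborel) = (\<integral>\<^sup>+y. g (c + y) \<partial>lborel)"
proof -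
  have "(\<integral>\<^sup>+x. g x \<partial>lborel) = (\<integral>\<^sup>+x. g x \<partial>distr lborel borel ((+) c))"
    by (simp add: lborel_distr_plus)
  also have "\<dots> = (\<integral>\<^sup>+y. g (c + y) \<partial>lborel)"
    by (subst nn_integral_distr) auto
  finally show ?thesis .
qed

lemma cn_shift_ineq:
  fixes v y :: "complex ^ 'n" and \<rho> a ell :: real and k N :: nat
  assumes "v \<noteq> 0" "\<rho> > 0" "ell > 0" "a \<le> inner v y" "inner v y \<le> a + ell" "k < N"
  defines "\<sigma> \<equiv> (if a \<ge> 0 then -1 else 1 :: real)"
  defines "c \<equiv> (\<sigma> * real k * 2 * ell / (norm v)\<^sup>2) *\<^sub>R v"
  shows "exp (- (4 * real N ^ 2 * ell\<^sup>2 / ((norm v)\<^sup>2 * \<rho>))) * cn_density \<rho> y \<le> cn_density \<rho> (c + y)"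
proof -
  define nv where "nv = (norm v)\<^sup>2"
  have nv: "nv > 0" using assms(1) unfolding nv_def by simp
  define \<alpha> where "\<alpha> = \<sigma> * real k * 2 * ell / nv"
  have c: "c = \<alpha> *\<^sub>R v" unfolding c_def \<alpha>_def nv_def by simp
  have ivv: "inner v v = nv" unfolding nv_def by (simp add: power2_norm_eq_inner)
  have eq: "(norm (c + y))\<^sup>2 = (norm y)\<^sup>2 + 2 * \<alpha> * inner v y + \<alpha>\<^sup>2 * nv"
    unfolding c power2_norm_eq_inner using ivv
    by (simp add: inner_add_left inner_add_right inner_commute algebra_simps power2_eq_square)
  have key: "2 * \<alpha> * inner v y + \<alpha>\<^sup>2 * nv \<le> 4 * real N ^ 2 * ell\<^sup>2 / nv"
  proof -
    have a2: "\<alpha>\<^sup>2 * nv = 4 * real k ^ 2 * ell\<^sup>2 / nv"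
      unfolding \<alpha>_def \<sigma>_def using nv by (simp add: field_simps power2_eq_square)
    have kN: "real k + 1 \<le> real N" using assms(6) by simp
    show ?thesis
    proof (cases "a \<ge> 0")
      case True
      have "2 * \<alpha> * inner v y \<le> 0"
        unfolding \<alpha>_def \<sigma>_def using True nv assms(3,4)
        by (simp add: mult_nonneg_nonneg divide_nonneg_pos)
      moreover have "4 * real k ^ 2 * ell\<^sup>2 / nv \<le> 4 * real N ^ 2 * ell\<^sup>2 / nv"
        using nv kN by (intro divide_right_mono mult_right_mono mult_left_mono power_mono) auto
      ultimately show ?thesis using a2 by linarith
    next
      case False
      have "inner v y \<le> ell" using False assms(5) by linarith
      then have "2 * \<alpha> * inner v y \<le> 2 * \<alpha> * ell"
        unfolding \<alpha>_def \<sigma>_def using False nv assms(3) by (intro mult_left_mono) auto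
      also have "2 * \<alpha> * ell = 4 * real k * ell\<^sup>2 / nv"
        unfolding \<alpha>_def \<sigma>_def using False nv by (simp add: field_simps power2_eq_square)
      finally have "2 * \<alpha> * inner v y + \<alpha>\<^sup>2 * nv \<le> 4 * (real k + real k ^ 2) * ell\<^sup>2 / nv"
        using a2 by (simp add: add_divide_distrib algebra_simps)
      also have "\<dots> \<le> 4 * real N ^ 2 * ell\<^sup>2 / nv"
      proof -
        have "real k + real k ^ 2 \<le> real N ^ 2"
        proof -
          have "real k + real k ^ 2 \<le> (real k + 1) ^ 2" by (simp add: power2_eq_square algebra_simps)
          also have "\<dots> \<le> real N ^ 2" using kN by (intro power_mono) auto
          finally show ?thesis .
        qed
        then show ?thesis using nv by (intro divide_right_mono mult_right_mono mult_left_mono) auto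
      qed
      finally show ?thesis .
    qed
  qed
  have "(norm (c + y))\<^sup>2 \<le> (norm y)\<^sup>2 + 4 * real N ^ 2 * ell\<^sup>2 / nv" using eq key by linarith
  then have "(norm (c + y))\<^sup>2 / \<rho> \<le> ((norm y)\<^sup>2 + 4 * real N ^ 2 * ell\<^sup>2 / nv) / \<rho>"
    by (rule divide_right_mono) (use assms in auto)
  also have "\<dots> = (norm y)\<^sup>2 / \<rho> + 4 * real N ^ 2 * ell\<^sup>2 / (nv * \<rho>)"
    by (simp add: add_divide_distrib)
  finally have "(norm (c + y))\<^sup>2 / \<rho> \<le> (norm y)\<^sup>2 / \<rho> + 4 * real N ^ 2 * ell\<^sup>2 / (nv * \<rho>)" .
  then have "exp (- (4 * real N ^ 2 * ell\<^sup>2 / (nv * \<rho>))) * exp (- (norm y)\<^sup>2 / \<rho>) \<le> exp (- (norm (c + y))\<^sup>2 / \<rho>)"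
    by (simp add: exp_add[symmetric])
  then have "exp (- (4 * real N ^ 2 * ell\<^sup>2 / (nv * \<rho>))) * exp (- (norm y)\<^sup>2 / \<rho>) / (pi * \<rho>) ^ CARD('n) \<le> exp (- (norm (c + y))\<^sup>2 / \<rho>) / (pi * \<rho>) ^ CARD('n)"
    by (rule divide_right_mono) (use assms(2) in simp)
  then show ?thesis unfolding cn_density_def nv_def by (simp only: times_divide_eq_right)
qed

lemma slab_sum:
  fixes v :: "complex ^ 'n" and \<rho> a ell :: real and N :: nat
  assumes v: "v \<noteq> 0" and rho: "\<rho> > 0" and ell: "ell > 0"
    and W_def: "W = density lborel (\<lambda>x. ennreal (cn_density \<rho> x))"
    and tot: "emeasure W UNIV \<le> 1"
  shows "real N * exp (- (4 * real N ^ 2 * ell\<^sup>2 / ((norm v)\<^sup>2 * \<rho>))) * measure W {x. a \<le> inner v x \<and> inner v x \<le> a + ell} \<le> 1"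
proof -
  define E where "E = exp (- (4 * real N ^ 2 * ell\<^sup>2 / ((norm v)\<^sup>2 * \<rho>)))"
  define Sl where "Sl = {x. a \<le> inner v x \<and> inner v x \<le> a + ell}"
  define \<sigma> where "\<sigma> = (if a \<ge> 0 then -1 else 1 :: real)"
  define c where "c = (\<lambda>k::nat. (\<sigma> * real k * 2 * ell / (norm v)\<^sup>2) *\<^sub>R v)"
  define T where "T = (\<lambda>k. {x. a \<le> inner v (x - c k) \<and> inner v (x - c k) \<le> a + ell})"
  have sW: "sets W = sets borel" unfolding W_def by simp
  have spW: "space W = UNIV" unfolding W_def by simp
  have finW: "finite_measure W" using tot spW by (intro finite_measureI) (auto simp: top_unique)
  interpret W: finite_measure W by fact
  have Sl_meas[measurable]: "Sl \<in> sets borel" unfolding Sl_def by measurable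
  have T_meas[measurable]: "T k \<in> sets borel" for k unfolding T_def by measurable
  have ivv: "inner v v = (norm v)\<^sup>2" by (simp add: power2_norm_eq_inner)
  have nv: "(norm v)\<^sup>2 > 0" using v by simp
  have Tc: "inner v (x - c k) = inner v x - \<sigma> * real k * 2 * ell" for x k
    unfolding c_def using ivv nv by (simp add: inner_diff_right)
  have lowerT: "ennreal E * emeasure W Sl \<le> emeasure W (T k)" if "k < N" for k
  proof -
    have "emeasure W (T k) = (\<integral>\<^sup>+x. ennreal (cn_density \<rho> x) * indicator (T k) x \<partial>lborel)"
      unfolding W_def by (subst emeasure_density) auto
    also have "\<dots> = (\<integral>\<^sup>+y. ennreal (cn_density \<rho> (c k + y)) * indicator (T k) (c k + y) \<partial>lborel)"
      by (rule lborel_shift_nn) measurable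
    also have "\<dots> = (\<integral>\<^sup>+y. ennreal (cn_density \<rho> (c k + y)) * indicator Sl y \<partial>lborel)"
      by (intro nn_integral_cong) (simp add: T_def Sl_def indicator_def)
    also have "\<dots> \<ge> (\<integral>\<^sup>+y. ennreal E * (ennreal (cn_density \<rho> y) * indicator Sl y) \<partial>lborel)"
    proof (intro nn_integral_mono)
      fix y
      show "ennreal E * (ennreal (cn_density \<rho> y) * indicator Sl y) \<le> ennreal (cn_density \<rho> (c k + y)) * indicator Sl y"
      proof (cases "y \<in> Sl")
        case True
        have "E * cn_density \<rho> y \<le> cn_density \<rho> (c k + y)"
          unfolding E_def c_def \<sigma>_def
          by (rule cn_shift_ineq) (use True v rho ell that in \<open>auto simp: Sl_def\<close>)
        moreover have "ennreal E * ennreal (cn_density \<rho> y) = ennreal (E * cn_density \<rho> y)"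
          using cn_density_nonneg[OF rho, of y] unfolding E_def by (rule ennreal_mult[symmetric, OF exp_ge_zero])
        ultimately show ?thesis using True by (simp add: ennreal_leI)
      qed simp
    qed
    also have "(\<integral>\<^sup>+y. ennreal E * (ennreal (cn_density \<rho> y) * indicator Sl y) \<partial>lborel) = ennreal E * emeasure W Sl"
      unfolding W_def by (subst nn_integral_cmult) (auto simp: emeasure_density)
    finally show ?thesis .
  qed
  have disj: "disjoint_family_on T {..<N}"
  proof (unfold disjoint_family_on_def, intro ballI impI)
    fix k k' assume kk: "k \<in> {..<N}" "k' \<in> {..<N}" "k \<noteq> k'"
    show "T k \<inter> T k' = {}"
    proof (rule ccontr)
      assume "T k \<inter> T k' \<noteq> {}"
      then obtain x where x: "x \<in> T k" "x \<in> T k'" by blast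
      then have "\<bar>\<sigma> * real k * 2 * ell - \<sigma> * real k' * 2 * ell\<bar> \<le> ell"
        unfolding T_def Tc by auto
      moreover have "\<sigma> * real k * 2 * ell - \<sigma> * real k' * 2 * ell = \<sigma> * ((2 * ell) * (real k - real k'))"
        by (simp add: algebra_simps)
      moreover have "\<bar>\<sigma>\<bar> = 1" unfolding \<sigma>_def by simp
      ultimately have "\<bar>(2 * ell) * (real k - real k')\<bar> \<le> ell" by (simp add: abs_mult)
      then have "(2 * ell) * \<bar>real k - real k'\<bar> \<le> ell" using ell by (simp add: abs_mult)
      moreover have "\<bar>real k - real k'\<bar> \<ge> 1" using kk(3) by linarith
      moreover have "(2 * ell) * 1 \<le> (2 * ell) * \<bar>real k - real k'\<bar>"
        using calculation(2) ell by (intro mult_left_mono) auto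
      ultimately show False using ell by linarith
    qed
  qed
  have "(\<Sum>k\<in>{..<N}. ennreal E * emeasure W Sl) \<le> (\<Sum>k\<in>{..<N}. emeasure W (T k))"
    by (intro sum_mono lowerT) auto
  also have "\<dots> = emeasure W (\<Union>k\<in>{..<N}. T k)"
    by (rule sum_emeasure[OF _ disj]) (auto simp: sW)
  also have "\<dots> \<le> emeasure W UNIV" by (intro emeasure_mono) (auto simp: sW)
  also have "\<dots> \<le> 1" by fact
  finally have "ennreal (real N * E * measure W Sl) \<le> 1"
    by (simp add: W.emeasure_eq_measure ennreal_mult[symmetric] E_def ennreal_of_nat_eq_real_of_nat)
  then show ?thesis unfolding E_def Sl_def by (simp add: ennreal_le_1)
qed

lemma slab_bound:
  fixes v :: "complex ^ 'n" and \<rho> a ell :: real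
  assumes v: "v \<noteq> 0" and rho: "\<rho> > 0" and ell: "ell > 0"
    and W_def: "W = density lborel (\<lambda>x. ennreal (cn_density \<rho> x))"
    and tot: "emeasure W UNIV \<le> 1"
  shows "measure W {x. a \<le> inner v x \<and> inner v x \<le> a + ell} \<le> 11 * ell / (norm v * sqrt \<rho>)"
proof -
  define m where "m = measure W {x. a \<le> inner v x \<and> inner v x \<le> a + ell}"
  have spW: "space W = UNIV" unfolding W_def by simp
  have finW: "finite_measure W" using tot spW by (intro finite_measureI) (auto simp: top_unique)
  interpret W: finite_measure W by fact
  have m1: "m \<le> 1"
  proof -
    have "m \<le> measure W UNIV" unfolding m_def using spW by (intro W.finite_measure_mono) (auto simp: W_def)
    also have "\<dots> \<le> 1" using tot spW by (simp add: W.emeasure_eq_measure)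
    finally show ?thesis .
  qed
  have m0: "m \<ge> 0" unfolding m_def by simp
  have nv: "norm v > 0" using v by simp
  have sr: "sqrt \<rho> > 0" using rho by simp
  define r where "r = norm v * sqrt \<rho> / (2 * ell)"
  have r0: "r > 0" unfolding r_def using nv sr ell by simp
  have goal_r: "11 * ell / (norm v * sqrt \<rho>) = 11 / (2 * r)"
    unfolding r_def using nv sr ell by (simp add: field_simps)
  show ?thesis
  proof (cases "r \<le> 1")
    case True
    have "1 \<le> 11 / (2 * r)" using True r0 by (simp add: field_simps)
    then show ?thesis using m1 goal_r unfolding m_def by linarith
  next
    case False
    define N where "N = nat \<lfloor>r\<rfloor>"
    have N1: "real N \<le> r" unfolding N_def using r0 by simp
    have N2: "real N \<ge> r / 2"
    proof (cases "r < 2")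
      case True
      then have "\<lfloor>r\<rfloor> = 1" using False by (simp add: floor_eq_iff)
      then show ?thesis unfolding N_def using True by simp
    next
      case False
      have "real_of_int \<lfloor>r\<rfloor> > r - 1" by linarith
      moreover have "real N = real_of_int \<lfloor>r\<rfloor>" unfolding N_def using r0 by simp
      ultimately show ?thesis using False by linarith
    qed
    have Npos: "real N > 0" using N2 r0 by linarith
    have q: "4 * real N ^ 2 * ell\<^sup>2 / ((norm v)\<^sup>2 * \<rho>) = (real N / r)\<^sup>2"
      unfolding r_def using nv sr ell rho by (simp add: field_simps power2_eq_square)
    have q1: "(real N / r)\<^sup>2 \<le> 1" using N1 Npos r0 by (simp add: power_le_one)
    have "real N * exp (- (4 * real N ^ 2 * ell\<^sup>2 / ((norm v)\<^sup>2 * \<rho>))) * m \<le> 1"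
      unfolding m_def by (rule slab_sum[OF v rho ell W_def tot])
    moreover have "real N * exp (-1) * m \<le> real N * exp (- (4 * real N ^ 2 * ell\<^sup>2 / ((norm v)\<^sup>2 * \<rho>))) * m"
      unfolding q using q1 Npos m0 by (intro mult_right_mono mult_left_mono) auto
    ultimately have "real N * exp (-1) * m \<le> 1" by linarith
    then have "m * (real N * exp (-1)) \<le> 1" by (simp add: algebra_simps)
    then have "m \<le> 1 / (real N * exp (-1))" using Npos by (subst le_divide_eq) auto
    also have "1 / (real N * exp (-1)) = exp 1 / real N" by (simp add: exp_minus field_simps)
    finally have "m \<le> exp 1 / real N" .
    also have "\<dots> \<le> exp 1 / (r / 2)" using N2 r0 by (intro divide_left_mono) auto
    also have "exp 1 / (r / 2) = 2 * exp 1 / r" by simp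
    also have "\<dots> \<le> 11 / (2 * r)" using e_less_272 r0 by (simp add: divide_simps)
    finally show ?thesis using goal_r unfolding m_def by simp
  qed
qed


lemma measurable_pair_borel:
  fixes X :: "'a \<Rightarrow> 'x::second_countable_topology" and Y :: "'a \<Rightarrow> 'y::second_countable_topology"
  assumes "X \<in> borel_measurable M" "Y \<in> borel_measurable M"
  shows "(\<lambda>\<omega>. (X \<omega>, Y \<omega>)) \<in> borel_measurable M"
  using measurable_Pair[OF assms] by (simp add: borel_prod)

lemma indep_rv_distr_pair:
  fixes X :: "'a \<Rightarrow> 'x::second_countable_topology" and Y :: "'a \<Rightarrow> 'y::second_countable_topology"
  assumes P: "prob_space M" and ind: "indep_rv M X Y"
  shows "distr M borel (\<lambda>\<omega>. (X \<omega>, Y \<omega>)) = distr M borel X \<Otimes>\<^sub>M distr M borel Y"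
proof -
  interpret prob_space M by fact
  have Xm[measurable]: "X \<in> borel_measurable M" and Ym[measurable]: "Y \<in> borel_measurable M"
    using ind unfolding indep_rv_def by auto
  have XYm[measurable]: "(\<lambda>\<omega>. (X \<omega>, Y \<omega>)) \<in> borel_measurable M"
    by (rule measurable_pair_borel[OF Xm Ym])
  show ?thesis
  proof (rule pair_measure_eqI[symmetric])
    show "sigma_finite_measure (distr M borel X)"
      using prob_space_distr[OF Xm] by (simp add: prob_space_imp_sigma_finite)
    show "sigma_finite_measure (distr M borel Y)"
      using prob_space_distr[OF Ym] by (simp add: prob_space_imp_sigma_finite)
    show "sets (distr M borel X \<Otimes>\<^sub>M distr M borel Y) = sets (distr M borel (\<lambda>\<omega>. (X \<omega>, Y \<omega>)))"
    proof -
      have "sets (distr M borel X \<Otimes>\<^sub>M distr M borel Y) = sets (borel \<Otimes>\<^sub>M borel)"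
        by (intro sets_pair_measure_cong) auto
      also have "\<dots> = sets (borel :: ('x \<times> 'y) measure)" unfolding borel_prod ..
      finally show ?thesis by simp
    qed
    fix A B assume A: "A \<in> sets (distr M borel X)" and B: "B \<in> sets (distr M borel Y)"
    then have [measurable]: "A \<in> sets borel" "B \<in> sets borel" by auto
    have AB: "A \<times> B \<in> sets (borel :: ('x \<times> 'y) measure)"
    proof -
      have "A \<times> B \<in> sets (borel \<Otimes>\<^sub>M borel)" by (rule pair_measureI) auto
      then show ?thesis unfolding borel_prod .
    qed
    have "emeasure (distr M borel (\<lambda>\<omega>. (X \<omega>, Y \<omega>))) (A \<times> B) = emeasure M {\<omega> \<in> space M. X \<omega> \<in> A \<and> Y \<omega> \<in> B}"
      by (subst emeasure_distr) (auto simp: AB intro!: arg_cong[where f="emeasure M"])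
    also have "\<dots> = ennreal (measure M {\<omega> \<in> space M. X \<omega> \<in> A} * measure M {\<omega> \<in> space M. Y \<omega> \<in> B})"
      using ind unfolding indep_rv_def by (simp add: emeasure_eq_measure)
    also have "\<dots> = emeasure (distr M borel X) A * emeasure (distr M borel Y) B"
      by (simp add: emeasure_distr emeasure_eq_measure ennreal_mult vimage_def Int_def conj_commute)
    finally show "emeasure (distr M borel X) A * emeasure (distr M borel Y) B = emeasure (distr M borel (\<lambda>\<omega>. (X \<omega>, Y \<omega>))) (A \<times> B)" by simp
  qed
qed

lemma mvmult_meas[measurable]: "(\<lambda>x. (J :: complex^'n^'m) *v x) \<in> borel_measurable borel"
  unfolding matrix_vector_mult_def by (intro borel_measurable_continuous_onI continuous_intros)

lemma reim_comp_meas[measurable]: "(\<lambda>y. reim_comp y c) \<in> borel_measurable borel"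
  unfolding reim_comp_def by (cases "snd c") (auto intro!: borel_measurable_continuous_onI continuous_intros)


lemma indep_rv_swap: "indep_rv M X Y \<Longrightarrow> indep_rv M Y X"
  unfolding indep_rv_def by (auto simp: conj_commute mult.commute)

definition vcoef :: "complex ^ 'i ^ 'b \<Rightarrow> 'b \<times> reim \<Rightarrow> complex ^ 'i" where
  "vcoef J c = (\<chi> i. (case snd c of ReP \<Rightarrow> cnj (J $ fst c $ i) | ImP \<Rightarrow> \<i> * cnj (J $ fst c $ i)))"

lemma reim_comp_add: "reim_comp (x + y) c = reim_comp x c + reim_comp y c"
  unfolding reim_comp_def by (cases "snd c") auto

lemma reim_comp_J: "reim_comp (J *v x) c = inner (vcoef J c) x"
  unfolding reim_comp_def vcoef_def matrix_vector_mult_def inner_vec_def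
  by (cases "snd c") (auto simp: inner_complex_def Re_sum Im_sum intro!: sum.cong)

lemma norm_vcoef: "norm (vcoef J c) = norm (J $ fst c)"
  unfolding vcoef_def norm_vec_def by (cases "snd c") (auto simp: norm_mult)

lemma abs_reim_comp: "\<bar>reim_comp y c\<bar> \<le> cmod (y $ fst c)"
  unfolding reim_comp_def by (cases "snd c") (auto simp: abs_Re_le_cmod abs_Im_le_cmod)


locale jam =
  fixes H :: "complex ^ 'u ^ 'b" and J :: "complex ^ 'i ^ 'b" and \<rho> :: real
    and \<Omega> :: "'a measure" and s :: "'a \<Rightarrow> complex ^ 'u" and w :: "'a \<Rightarrow> complex ^ 'i"
    and n :: "'a \<Rightarrow> complex ^ 'b" and Qf :: "'b \<times> reim \<Rightarrow> real \<Rightarrow> real" and m :: nat and N0 :: real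
  assumes rho: "\<rho> > 0"
    and prob: "prob_space \<Omega>"
    and s_meas[measurable]: "s \<in> borel_measurable \<Omega>"
    and w_gauss: "distributed \<Omega> lborel w (\<lambda>x. ennreal (cn_density \<rho> x))"
    and n_gauss: "distributed \<Omega> lborel n (\<lambda>x. ennreal (cn_density N0 x))"
    and indep_wn: "indep_rv \<Omega> w n"
    and indep_s: "indep_rv \<Omega> s (\<lambda>\<omega>. (w \<omega>, n \<omega>))"
    and s_power_int: "\<And>u. integrable \<Omega> (\<lambda>\<omega>. (cmod (s \<omega> $ u))\<^sup>2)"
    and s_power: "\<And>u. (\<integral>\<omega>. (cmod (s \<omega> $ u))\<^sup>2 \<partial>\<Omega>) \<le> 1"
    and m2: "m \<ge> 2"
    and quant: "\<And>c. is_quantizer (Qf c) m"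
    and J_rows: "\<And>b. J $ b \<noteq> 0"
begin

sublocale prob_space \<Omega> by (rule prob)

lemma w_meas[measurable]: "w \<in> borel_measurable \<Omega>"
  using distributed_measurable[OF w_gauss] by (simp add: measurable_cong_sets[OF refl sets_lborel])

lemma n_meas[measurable]: "n \<in> borel_measurable \<Omega>"
  using distributed_measurable[OF n_gauss] by (simp add: measurable_cong_sets[OF refl sets_lborel])

definition Z :: "'a \<Rightarrow> complex ^ 'b" where "Z \<omega> = J *v w \<omega> + n \<omega>"

lemma Z_meas[measurable]: "Z \<in> borel_measurable \<Omega>"
  unfolding Z_def by measurable

lemma W_tot: "emeasure (density lborel (\<lambda>x::complex^'i. ennreal (cn_density \<rho> x))) UNIV \<le> 1"
proof -
  have eq: "density lborel (\<lambda>x. ennreal (cn_density \<rho> x)) = distr \<Omega> lborel w"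
    using distributed_distr_eq_density[OF w_gauss] by simp
  have "prob_space (distr \<Omega> lborel w)"
    by (rule prob_space_distr) (use distributed_measurable[OF w_gauss] in auto)
  then have "emeasure (distr \<Omega> lborel w) (space (distr \<Omega> lborel w)) = 1"
    by (rule prob_space.emeasure_space_1)
  moreover have "space (distr \<Omega> lborel w) = UNIV" by simp
  ultimately have "emeasure (distr \<Omega> lborel w) UNIV = 1" by simp
  then show ?thesis unfolding eq by simp
qed

lemma slab_w:
  assumes "v \<noteq> 0" "ell > 0"
  shows "prob {\<omega> \<in> space \<Omega>. a \<le> inner v (w \<omega>) \<and> inner v (w \<omega>) \<le> a + ell} \<le> 11 * ell / (norm v * sqrt \<rho>)"
proof -
  let ?W = "density lborel (\<lambda>x. ennreal (cn_density \<rho> x))"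
  have eq: "distr \<Omega> lborel w = ?W" using distributed_distr_eq_density[OF w_gauss] by simp
  have wm: "w \<in> measurable \<Omega> lborel" using distributed_measurable[OF w_gauss] .
  have "prob {\<omega> \<in> space \<Omega>. a \<le> inner v (w \<omega>) \<and> inner v (w \<omega>) \<le> a + ell}
      = measure (distr \<Omega> lborel w) {x. a \<le> inner v x \<and> inner v x \<le> a + ell}"
    by (subst measure_distr[OF wm]) (auto intro!: arg_cong[where f=prob])
  also have "\<dots> \<le> 11 * ell / (norm v * sqrt \<rho>)"
    unfolding eq by (rule slab_bound[OF assms(1) rho assms(2) refl W_tot])
  finally show ?thesis .
qed

lemma Z_reim: "reim_comp (Z \<omega>) c = inner (vcoef J c) (w \<omega>) + reim_comp (n \<omega>) c"
  unfolding Z_def reim_comp_add reim_comp_J ..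

lemma slab_Z:
  assumes ell: "ell > 0"
  shows "prob {\<omega> \<in> space \<Omega>. a \<le> reim_comp (Z \<omega>) c \<and> reim_comp (Z \<omega>) c \<le> a + ell}
    \<le> 11 * ell / (norm (J $ fst c) * sqrt \<rho>)"
proof -
  define v where "v = vcoef J c"
  define bnd where "bnd = 11 * ell / (norm (J $ fst c) * sqrt \<rho>)"
  have v0: "v \<noteq> 0" using norm_vcoef[of J c] J_rows[of "fst c"] unfolding v_def by auto
  have nv: "norm v = norm (J $ fst c)" unfolding v_def by (rule norm_vcoef)
  have bnd0: "bnd \<ge> 0" unfolding bnd_def using ell rho by simp
  let ?Nn = "distr \<Omega> borel n" and ?Wd = "distr \<Omega> borel w"
  have pair: "distr \<Omega> borel (\<lambda>\<omega>. (n \<omega>, w \<omega>)) = ?Nn \<Otimes>\<^sub>M ?Wd"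
    by (rule indep_rv_distr_pair[OF prob indep_rv_swap[OF indep_wn]])
  define E where "E = {(y, x). a \<le> inner v x + reim_comp y c \<and> inner v x + reim_comp y c \<le> a + ell}"
  have fc: "continuous_on UNIV (\<lambda>p::(complex^'b) \<times> (complex^'i). inner v (snd p) + reim_comp (fst p) c)"
    by (cases "snd c") (auto simp: reim_comp_def intro!: continuous_intros)
  have Eeq: "E = (\<lambda>p::(complex^'b) \<times> (complex^'i). inner v (snd p) + reim_comp (fst p) c) -` {a..a+ell}"
    unfolding E_def by auto
  have E_borel: "E \<in> sets (borel :: ((complex^'b) \<times> (complex^'i)) measure)"
    unfolding Eeq by (rule measurable_sets_borel[OF borel_measurable_continuous_onI[OF fc]]) simp
  have E_pair: "E \<in> sets (?Nn \<Otimes>\<^sub>M ?Wd)"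
  proof -
    have "sets (?Nn \<Otimes>\<^sub>M ?Wd) = sets (borel \<Otimes>\<^sub>M borel)" by (intro sets_pair_measure_cong) auto
    also have "\<dots> = sets (borel :: ((complex^'b) \<times> (complex^'i)) measure)" unfolding borel_prod ..
    finally show ?thesis using E_borel by simp
  qed
  interpret Wd: prob_space ?Wd by (rule prob_space_distr) simp
  interpret Nn: prob_space ?Nn by (rule prob_space_distr) simp
  have "emeasure \<Omega> {\<omega> \<in> space \<Omega>. a \<le> reim_comp (Z \<omega>) c \<and> reim_comp (Z \<omega>) c \<le> a + ell}
      = emeasure (distr \<Omega> borel (\<lambda>\<omega>. (n \<omega>, w \<omega>))) E"
    by (subst emeasure_distr[OF measurable_pair_borel[OF n_meas w_meas] E_borel])
       (auto simp: Z_reim v_def E_def intro!: arg_cong[where f="emeasure \<Omega>"])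
  also have "\<dots> = (\<integral>\<^sup>+y. emeasure ?Wd (Pair y -` E) \<partial>?Nn)"
    unfolding pair by (rule Wd.emeasure_pair_measure_alt[OF E_pair])
  also have "\<dots> \<le> (\<integral>\<^sup>+y. ennreal bnd \<partial>?Nn)"
  proof (intro nn_integral_mono)
    fix y
    have "Pair y -` E = {x. (a - reim_comp y c) \<le> inner v x \<and> inner v x \<le> (a - reim_comp y c) + ell}"
      unfolding E_def by auto
    moreover have "{x. (a - reim_comp y c) \<le> inner v x \<and> inner v x \<le> (a - reim_comp y c) + ell} \<in> sets borel"
      by measurable
    ultimately have "emeasure ?Wd (Pair y -` E) = emeasure \<Omega> {\<omega> \<in> space \<Omega>. (a - reim_comp y c) \<le> inner v (w \<omega>) \<and> inner v (w \<omega>) \<le> (a - reim_comp y c) + ell}"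
      by (subst emeasure_distr) (auto intro!: arg_cong[where f="emeasure \<Omega>"])
    also have "\<dots> = ennreal (prob {\<omega> \<in> space \<Omega>. (a - reim_comp y c) \<le> inner v (w \<omega>) \<and> inner v (w \<omega>) \<le> (a - reim_comp y c) + ell})"
      by (simp add: emeasure_eq_measure)
    also have "\<dots> \<le> ennreal bnd"
      using slab_w[OF v0 ell, of "a - reim_comp y c"] unfolding bnd_def nv by (intro ennreal_leI) simp
    finally show "emeasure ?Wd (Pair y -` E) \<le> ennreal bnd" .
  qed
  also have "\<dots> = ennreal bnd" using Nn.emeasure_space_1 by simp
  finally show ?thesis unfolding bnd_def using bnd0
    by (simp add: emeasure_eq_measure bnd_def)
qed

end

lemma reim_UNIV: "(UNIV :: reim set) = {ReP, ImP}"
  using reim.exhaust by auto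

lemma finite_C: "finite (UNIV :: ('b::finite \<times> reim) set)"
proof -
  have r: "finite (UNIV :: reim set)" unfolding reim_UNIV by simp
  have "finite ((UNIV::'b set) \<times> (UNIV::reim set))" using r by (intro finite_cartesian_product) auto
  then show ?thesis by (simp only: UNIV_Times_UNIV)
qed

lemma card_C: "card (UNIV :: ('b::finite \<times> reim) set) = 2 * CARD('b)"
proof -
  have "card (UNIV :: ('b \<times> reim) set) = card ((UNIV :: 'b set) \<times> (UNIV :: reim set))"
    by (simp only: UNIV_Times_UNIV)
  also have "\<dots> = card (UNIV :: 'b set) * card (UNIV :: reim set)"
    by (rule card_cartesian_product)
  also have "card (UNIV :: reim set) = 2" unfolding reim_UNIV by simp
  finally show ?thesis by simp
qed

lemma quant_meas:
  assumes "is_quantizer Q m"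
  shows "Q \<in> borel_measurable borel"
proof (rule borel_measurableI)
  fix S :: "real set"
  have fin: "finite (range Q)" and iv: "\<And>v. v \<in> range Q \<Longrightarrow> is_interval (Q -` {v})"
    using assms unfolding is_quantizer_def by auto
  have "Q -` S = (\<Union>v\<in>range Q \<inter> S. Q -` {v})" by auto
  moreover have "(\<Union>v\<in>range Q \<inter> S. Q -` {v}) \<in> sets borel"
    using fin iv by (intro sets.finite_UN) (auto intro: real_interval_borel_measurable)
  ultimately show "Q -` S \<inter> space borel \<in> sets borel" by simp
qed

context jam
begin

definition qz :: "complex ^ 'u \<Rightarrow> complex ^ 'b \<Rightarrow> 'b \<times> reim \<Rightarrow> real" where
  "qz \<sigma> z = quantize Qf (H *v \<sigma> + z)"

lemma X_eq: "quantize Qf (rx_signal H J (s \<omega>) (w \<omega>) (n \<omega>)) = qz (s \<omega>) (Z \<omega>)"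
  unfolding qz_def Z_def rx_signal_def by (simp add: add.assoc)

lemma flip_c:
  "prob {\<omega> \<in> space \<Omega>. Qf c (\<delta> + reim_comp (Z \<omega>) c) \<noteq> Qf c (reim_comp (Z \<omega>) c)}
    \<le> real m * (44 * \<bar>\<delta>\<bar> / (norm (J $ fst c) * sqrt \<rho>))"
proof (cases "\<delta> = 0")
  case True then show ?thesis by simp
next
  case False
  then have d0: "\<bar>\<delta>\<bar> > 0" by simp
  obtain T where T: "finite T" "card T \<le> m"
    "\<And>t \<delta>. Qf c (t + \<delta>) \<noteq> Qf c t \<Longrightarrow> \<exists>e\<in>T. \<bar>t - e\<bar> \<le> 2 * \<bar>\<delta>\<bar>"
    using quant_thresh[OF quant[of c]] by blast
  define A where "A = (\<lambda>e. {\<omega> \<in> space \<Omega>. (e - 2 * \<bar>\<delta>\<bar>) \<le> reim_comp (Z \<omega>) c \<and> reim_comp (Z \<omega>) c \<le> (e - 2 * \<bar>\<delta>\<bar>) + 4 * \<bar>\<delta>\<bar>})"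
  have sub: "{\<omega> \<in> space \<Omega>. Qf c (\<delta> + reim_comp (Z \<omega>) c) \<noteq> Qf c (reim_comp (Z \<omega>) c)} \<subseteq> (\<Union>e\<in>T. A e)"
  proof
    fix \<omega> assume "\<omega> \<in> {\<omega> \<in> space \<Omega>. Qf c (\<delta> + reim_comp (Z \<omega>) c) \<noteq> Qf c (reim_comp (Z \<omega>) c)}"
    then have om: "\<omega> \<in> space \<Omega>" and ne: "Qf c (reim_comp (Z \<omega>) c + \<delta>) \<noteq> Qf c (reim_comp (Z \<omega>) c)"
      by (auto simp: add.commute)
    obtain e where "e \<in> T" "\<bar>reim_comp (Z \<omega>) c - e\<bar> \<le> 2 * \<bar>\<delta>\<bar>" using T(3)[OF ne] by blast
    then show "\<omega> \<in> (\<Union>e\<in>T. A e)" unfolding A_def using om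
      by (intro UN_I[of e]) (auto simp: abs_le_iff)
  qed
  have "A e \<in> events" for e unfolding A_def by measurable
  then have Am: "A ` T \<subseteq> events" by auto
  have "prob {\<omega> \<in> space \<Omega>. Qf c (\<delta> + reim_comp (Z \<omega>) c) \<noteq> Qf c (reim_comp (Z \<omega>) c)} \<le> prob (\<Union>e\<in>T. A e)"
    using sub Am T(1) by (intro finite_measure_mono) auto
  also have "\<dots> \<le> (\<Sum>e\<in>T. prob (A e))" by (rule finite_measure_subadditive_finite[OF T(1) Am])
  also have "\<dots> \<le> (\<Sum>e\<in>T. 11 * (4 * \<bar>\<delta>\<bar>) / (norm (J $ fst c) * sqrt \<rho>))"
    unfolding A_def by (intro sum_mono slab_Z) (use d0 in simp)
  also have "\<dots> = real (card T) * (44 * \<bar>\<delta>\<bar> / (norm (J $ fst c) * sqrt \<rho>))" by simp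
  also have "\<dots> \<le> real m * (44 * \<bar>\<delta>\<bar> / (norm (J $ fst c) * sqrt \<rho>))"
    using T(2) rho by (intro mult_right_mono) auto
  finally show ?thesis .
qed

lemma flip_all:
  "prob {\<omega> \<in> space \<Omega>. qz \<sigma> (Z \<omega>) \<noteq> qz 0 (Z \<omega>)}
    \<le> (\<Sum>c\<in>UNIV. real m * (44 * \<bar>reim_comp (H *v \<sigma>) c\<bar> / (norm (J $ fst c) * sqrt \<rho>)))"
proof -
  define A where "A = (\<lambda>c. {\<omega> \<in> space \<Omega>. Qf c (reim_comp (H *v \<sigma>) c + reim_comp (Z \<omega>) c) \<noteq> Qf c (reim_comp (Z \<omega>) c)})"
  have sub: "{\<omega> \<in> space \<Omega>. qz \<sigma> (Z \<omega>) \<noteq> qz 0 (Z \<omega>)} \<subseteq> (\<Union>c\<in>UNIV. A c)"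
    unfolding A_def qz_def quantize_def by (auto simp: reim_comp_add fun_eq_iff)
  have Am: "A ` UNIV \<subseteq> events"
  proof -
    have "A c \<in> events" for c
    proof -
      have [measurable]: "Qf c \<in> borel_measurable borel" by (rule quant_meas[OF quant])
      show ?thesis unfolding A_def by measurable
    qed
    then show ?thesis by auto
  qed
  have "prob {\<omega> \<in> space \<Omega>. qz \<sigma> (Z \<omega>) \<noteq> qz 0 (Z \<omega>)} \<le> prob (\<Union>c\<in>UNIV. A c)"
    using sub Am finite_C by (intro finite_measure_mono) auto
  also have "\<dots> \<le> (\<Sum>c\<in>UNIV. prob (A c))" by (rule finite_measure_subadditive_finite[OF finite_C Am])
  also have "\<dots> \<le> (\<Sum>c\<in>UNIV. real m * (44 * \<bar>reim_comp (H *v \<sigma>) c\<bar> / (norm (J $ fst c) * sqrt \<rho>)))"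
    unfolding A_def by (intro sum_mono flip_c)
  finally show ?thesis .
qed

end

context jam
begin

definition S where "S = distr \<Omega> borel s"
definition GZ where "GZ = distr \<Omega> borel Z"
definition Xq where "Xq \<omega> = qz (s \<omega>) (Z \<omega>)"
definition K where "K = Xq ` space \<Omega>"
definition pz where "pz x \<sigma> = prob {\<omega> \<in> space \<Omega>. qz \<sigma> (Z \<omega>) = x}"
definition pbar where "pbar x = prob {\<omega> \<in> space \<Omega>. Xq \<omega> = x}"

lemma qz_set_borel:
  "{p :: (complex^'u) \<times> (complex^'b). qz (fst p) (snd p) = x} \<in> sets borel"
proof -
  define f where "f = (\<lambda>c (p :: (complex^'u) \<times> (complex^'b)). Qf c (reim_comp (H *v fst p + snd p) c))"
  have fm: "f c \<in> borel_measurable borel" for c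
  proof -
    have [measurable]: "Qf c \<in> borel_measurable borel" by (rule quant_meas[OF quant])
    have cont: "continuous_on UNIV (\<lambda>p :: (complex^'u) \<times> (complex^'b). reim_comp (H *v fst p + snd p) c)"
      unfolding reim_comp_def matrix_vector_mult_def
      by (cases "snd c") (auto intro!: continuous_intros)
    have [measurable]: "(\<lambda>p :: (complex^'u) \<times> (complex^'b). reim_comp (H *v fst p + snd p) c) \<in> borel_measurable borel"
      by (rule borel_measurable_continuous_onI[OF cont])
    show ?thesis unfolding f_def by measurable
  qed
  have eq: "{p. qz (fst p) (snd p) = x} = (\<Inter>c\<in>UNIV. f c -` {x c})"
    unfolding qz_def quantize_def f_def by (auto simp: fun_eq_iff)
  show ?thesis unfolding eq
    by (rule sets.finite_INT[OF finite_C]) (auto intro: measurable_sets_borel[OF fm])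
qed

lemma Xq_meas_set: "{\<omega> \<in> space \<Omega>. Xq \<omega> = x} \<in> events"
proof -
  have "{\<omega> \<in> space \<Omega>. Xq \<omega> = x} = (\<lambda>\<omega>. (s \<omega>, Z \<omega>)) -` {p. qz (fst p) (snd p) = x} \<inter> space \<Omega>"
    unfolding Xq_def by auto
  then show ?thesis
    using measurable_sets[OF measurable_pair_borel[OF s_meas Z_meas] qz_set_borel] by simp
qed

lemma qzZ_meas_set: "{\<omega> \<in> space \<Omega>. qz \<sigma> (Z \<omega>) = x} \<in> events"
proof -
  have eq: "{\<omega> \<in> space \<Omega>. qz \<sigma> (Z \<omega>) = x} = (\<lambda>\<omega>. (\<sigma>, Z \<omega>)) -` {p. qz (fst p) (snd p) = x} \<inter> space \<Omega>"
    by auto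
  have m: "(\<lambda>\<omega>. (\<sigma>, Z \<omega>)) \<in> borel_measurable \<Omega>"
    by (rule measurable_pair_borel) auto
  have "(\<lambda>\<omega>. (\<sigma>, Z \<omega>)) -` {p. qz (fst p) (snd p) = x} \<inter> space \<Omega> \<in> sets \<Omega>"
    by (rule measurable_sets[OF m qz_set_borel])
  then show ?thesis unfolding eq .
qed

lemma indep_sZ: "indep_rv \<Omega> s Z"
proof -
  define f where "f = (\<lambda>p :: (complex^'i) \<times> (complex^'b). J *v fst p + snd p)"
  have fc: "continuous_on UNIV f" unfolding f_def matrix_vector_mult_def by (auto intro!: continuous_intros)
  have fm: "f \<in> borel_measurable borel" by (rule borel_measurable_continuous_onI[OF fc])
  have Zf: "Z \<omega> = f (w \<omega>, n \<omega>)" for \<omega> unfolding Z_def f_def by simp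
  show ?thesis unfolding indep_rv_def
  proof (intro conjI ballI)
    fix A :: "(complex^'u) set" and B :: "(complex^'b) set" assume A: "A \<in> sets borel" and B: "B \<in> sets borel"
    have fB: "f -` B \<in> sets borel" by (rule measurable_sets_borel[OF fm B])
    have "prob {\<omega> \<in> space \<Omega>. s \<omega> \<in> A \<and> Z \<omega> \<in> B} = prob {\<omega> \<in> space \<Omega>. s \<omega> \<in> A \<and> (w \<omega>, n \<omega>) \<in> f -` B}"
      unfolding Zf by simp
    also have "\<dots> = prob {\<omega> \<in> space \<Omega>. s \<omega> \<in> A} * prob {\<omega> \<in> space \<Omega>. (w \<omega>, n \<omega>) \<in> f -` B}"
      using indep_s A fB unfolding indep_rv_def by blast
    also have "{\<omega> \<in> space \<Omega>. (w \<omega>, n \<omega>) \<in> f -` B} = {\<omega> \<in> space \<Omega>. Z \<omega> \<in> B}"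
      unfolding Zf by simp
    finally show "prob {\<omega> \<in> space \<Omega>. s \<omega> \<in> A \<and> Z \<omega> \<in> B} = prob {\<omega> \<in> space \<Omega>. s \<omega> \<in> A} * prob {\<omega> \<in> space \<Omega>. Z \<omega> \<in> B}" .
  qed auto
qed

lemma joint_sZ: "distr \<Omega> borel (\<lambda>\<omega>. (s \<omega>, Z \<omega>)) = S \<Otimes>\<^sub>M GZ"
  unfolding S_def GZ_def by (rule indep_rv_distr_pair[OF prob indep_sZ])

lemma S_prob: "prob_space S" unfolding S_def by (rule prob_space_distr) simp
lemma GZ_prob: "prob_space GZ" unfolding GZ_def by (rule prob_space_distr) simp
lemma sets_S[simp]: "sets S = sets borel" unfolding S_def by simp
lemma space_S[simp]: "space S = UNIV" unfolding S_def by simp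
lemma sets_GZ[simp]: "sets GZ = sets borel" unfolding GZ_def by simp

lemma sets_SGZ: "sets (S \<Otimes>\<^sub>M GZ) = sets (borel :: ((complex^'u) \<times> (complex^'b)) measure)"
proof -
  have "sets (S \<Otimes>\<^sub>M GZ) = sets (borel \<Otimes>\<^sub>M borel)" by (intro sets_pair_measure_cong) auto
  also have "\<dots> = sets (borel :: ((complex^'u) \<times> (complex^'b)) measure)" unfolding borel_prod ..
  finally show ?thesis .
qed

lemma pz_emeasure: "ennreal (pz x \<sigma>) = emeasure GZ (Pair \<sigma> -` {p. qz (fst p) (snd p) = x})"
proof -
  have "Pair \<sigma> -` {p. qz (fst p) (snd p) = x} = {z. qz \<sigma> z = x}" by auto
  moreover have "{z. qz \<sigma> z = x} \<in> sets borel"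
  proof -
    have "(Pair \<sigma>) \<in> borel_measurable borel" by (intro borel_measurable_continuous_onI continuous_intros)
    from measurable_sets_borel[OF this qz_set_borel] show ?thesis by (simp add: vimage_def)
  qed
  ultimately show ?thesis unfolding pz_def GZ_def
    by (simp add: emeasure_distr emeasure_eq_measure vimage_def Int_def conj_commute)
qed

lemma pz_bounds: "0 \<le> pz x \<sigma>" "pz x \<sigma> \<le> 1"
  unfolding pz_def by auto

lemma pz_meas[measurable]: "(\<lambda>\<sigma>. pz x \<sigma>) \<in> borel_measurable borel"
proof -
  interpret GZ: prob_space GZ by (rule GZ_prob)
  have "(\<lambda>\<sigma>. emeasure GZ (Pair \<sigma> -` {p. qz (fst p) (snd p) = x})) \<in> borel_measurable S"
    by (rule GZ.measurable_emeasure_Pair) (unfold sets_SGZ, rule qz_set_borel)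
  then have "(\<lambda>\<sigma>. enn2real (ennreal (pz x \<sigma>))) \<in> borel_measurable S"
    unfolding pz_emeasure by measurable
  moreover have "enn2real (ennreal (pz x \<sigma>)) = pz x \<sigma>" for \<sigma> using pz_bounds by simp
  ultimately show ?thesis by (simp add: measurable_cong_sets[OF sets_S refl])
qed

lemma key_joint:
  assumes B: "B \<in> sets borel"
  shows "emeasure \<Omega> {\<omega> \<in> space \<Omega>. Xq \<omega> = x \<and> s \<omega> \<in> B} = (\<integral>\<^sup>+\<sigma>. ennreal (pz x \<sigma>) * indicator B \<sigma> \<partial>S)"
proof -
  interpret GZ: prob_space GZ by (rule GZ_prob)
  define E where "E = {p :: (complex^'u) \<times> (complex^'b). fst p \<in> B \<and> qz (fst p) (snd p) = x}"
  have EB: "E \<in> sets borel"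
  proof -
    have "(fst :: (complex^'u) \<times> (complex^'b) \<Rightarrow> complex^'u) \<in> borel_measurable borel"
      by (intro borel_measurable_continuous_onI continuous_intros)
    from measurable_sets_borel[OF this B] have "(fst :: (complex^'u) \<times> (complex^'b) \<Rightarrow> complex^'u) -` B \<in> sets borel" .
    moreover have "E = fst -` B \<inter> {p. qz (fst p) (snd p) = x}" unfolding E_def by auto
    ultimately show ?thesis using qz_set_borel by auto
  qed
  have "emeasure \<Omega> {\<omega> \<in> space \<Omega>. Xq \<omega> = x \<and> s \<omega> \<in> B} = emeasure (distr \<Omega> borel (\<lambda>\<omega>. (s \<omega>, Z \<omega>))) E"
    by (subst emeasure_distr[OF measurable_pair_borel[OF s_meas Z_meas] EB])
       (auto simp: E_def Xq_def conj_commute intro!: arg_cong[where f="emeasure \<Omega>"])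
  also have "\<dots> = (\<integral>\<^sup>+\<sigma>. emeasure GZ (Pair \<sigma> -` E) \<partial>S)"
    unfolding joint_sZ by (rule GZ.emeasure_pair_measure_alt) (unfold sets_SGZ, rule EB)
  also have "\<dots> = (\<integral>\<^sup>+\<sigma>. ennreal (pz x \<sigma>) * indicator B \<sigma> \<partial>S)"
  proof (intro nn_integral_cong)
    fix \<sigma>
    show "emeasure GZ (Pair \<sigma> -` E) = ennreal (pz x \<sigma>) * indicator B \<sigma>"
      unfolding pz_emeasure E_def by (cases "\<sigma> \<in> B") (auto simp: vimage_def)
  qed
  finally show ?thesis .
qed

end

lemma pair_measure_ext:
  assumes sM: "sets M = sets (M1 \<Otimes>\<^sub>M M2)" and sN: "sets N = sets (M1 \<Otimes>\<^sub>M M2)"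
    and fin: "emeasure M (space M1 \<times> space M2) \<noteq> \<infinity>"
    and eq: "\<And>A B. A \<in> sets M1 \<Longrightarrow> B \<in> sets M2 \<Longrightarrow> emeasure M (A \<times> B) = emeasure N (A \<times> B)"
  shows "M = N"
proof (rule measure_eqI_generator_eq[OF Int_stable_pair_measure_generator[of M1 M2],
      where \<Omega>="space M1 \<times> space M2" and A="\<lambda>_. space M1 \<times> space M2"])
  show "{a \<times> b |a b. a \<in> sets M1 \<and> b \<in> sets M2} \<subseteq> Pow (space M1 \<times> space M2)"
    using sets.space_closed[of M1] sets.space_closed[of M2] by auto
  show "sets M = sigma_sets (space M1 \<times> space M2) {a \<times> b |a b. a \<in> sets M1 \<and> b \<in> sets M2}"
    using sM by (simp add: sets_pair_measure)
  show "sets N = sigma_sets (space M1 \<times> space M2) {a \<times> b |a b. a \<in> sets M1 \<and> b \<in> sets M2}"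
    using sN by (simp add: sets_pair_measure)
  show "range (\<lambda>_. space M1 \<times> space M2) \<subseteq> {a \<times> b |a b. a \<in> sets M1 \<and> b \<in> sets M2}" by auto
  show "(\<Union>i::nat. space M1 \<times> space M2) = space M1 \<times> space M2" by simp
  show "\<And>i::nat. emeasure M (space M1 \<times> space M2) \<noteq> \<infinity>" using fin .
  fix X assume "X \<in> {a \<times> b |a b. a \<in> sets M1 \<and> b \<in> sets M2}"
  then show "emeasure M X = emeasure N X" using eq by auto
qed

context jam
begin

lemma K_sub: "K \<subseteq> (\<Pi>\<^sub>E c\<in>UNIV. range (Qf c))"
  unfolding K_def Xq_def qz_def quantize_def by auto

lemma K_finite: "finite K"
proof -
  have "finite (\<Pi>\<^sub>E c\<in>(UNIV :: ('b \<times> reim) set). range (Qf c))"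
    using finite_C quant unfolding is_quantizer_def by (intro finite_PiE) auto
  then show ?thesis using K_sub finite_subset by blast
qed

lemma K_card: "card K \<le> m ^ (2 * CARD('b))"
proof -
  have "card K \<le> card (\<Pi>\<^sub>E c\<in>(UNIV :: ('b \<times> reim) set). range (Qf c))"
    using finite_C quant K_sub unfolding is_quantizer_def by (intro card_mono finite_PiE) auto
  also have "\<dots> = (\<Prod>c\<in>(UNIV :: ('b \<times> reim) set). card (range (Qf c)))"
    by (rule card_PiE[OF finite_C])
  also have "\<dots> = (\<Prod>c\<in>(UNIV :: ('b \<times> reim) set). m)"
    using quant unfolding is_quantizer_def by (intro prod.cong) auto
  also have "\<dots> = m ^ card (UNIV :: ('b \<times> reim) set)" by (rule prod_constant)
  also have "\<dots> = m ^ (2 * CARD('b))" by (simp only: card_C)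
  finally show ?thesis .
qed

lemma Xq_meas_K: "Xq \<in> measurable \<Omega> (count_space K)"
  unfolding measurable_count_space_eq2[OF K_finite]
proof (intro conjI ballI)
  show "Xq \<in> space \<Omega> \<rightarrow> K" unfolding K_def by auto
  fix a
  have "Xq -` {a} \<inter> space \<Omega> = {\<omega> \<in> space \<Omega>. Xq \<omega> = a}" by auto
  then show "Xq -` {a} \<inter> space \<Omega> \<in> events" using Xq_meas_set by simp
qed

lemma pbar_nn: "ennreal (pbar x) = (\<integral>\<^sup>+\<sigma>. ennreal (pz x \<sigma>) \<partial>S)"
proof -
  have "ennreal (pbar x) = emeasure \<Omega> {\<omega> \<in> space \<Omega>. Xq \<omega> = x \<and> s \<omega> \<in> UNIV}"
    unfolding pbar_def by (simp add: emeasure_eq_measure)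
  also have "\<dots> = (\<integral>\<^sup>+\<sigma>. ennreal (pz x \<sigma>) * indicator UNIV \<sigma> \<partial>S)" by (rule key_joint) simp
  finally show ?thesis by simp
qed

lemma pz_integrable: "integrable S (pz x)"
proof -
  interpret S: prob_space S by (rule S_prob)
  show ?thesis
    by (rule S.integrable_const_bound[where B=1]) (auto simp: pz_bounds measurable_cong_sets[OF sets_S refl])
qed

lemma pbar_int: "pbar x = (\<integral>\<sigma>. pz x \<sigma> \<partial>S)"
proof -
  have "ennreal (pbar x) = ennreal (\<integral>\<sigma>. pz x \<sigma> \<partial>S)"
    unfolding pbar_nn by (rule nn_integral_eq_integral[OF pz_integrable]) (simp add: pz_bounds)
  moreover have "pbar x \<ge> 0" "(\<integral>\<sigma>. pz x \<sigma> \<partial>S) \<ge> 0" unfolding pbar_def by (auto simp: pz_bounds)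
  ultimately show ?thesis by simp
qed

definition MX where "MX = distr \<Omega> (count_space K) Xq"
definition M0 where "M0 = MX \<Otimes>\<^sub>M S"
definition Nj where "Nj = distr \<Omega> (count_space K \<Otimes>\<^sub>M borel) (\<lambda>\<omega>. (Xq \<omega>, s \<omega>))"
definition gd where "gd p = (if pbar (fst p) = 0 then 0 else pz (fst p) (snd p) / pbar (fst p))"

lemma MX_prob: "prob_space MX" unfolding MX_def by (rule prob_space_distr[OF Xq_meas_K])

lemma emeasure_MX: "x \<in> K \<Longrightarrow> emeasure MX {x} = ennreal (pbar x)"
  unfolding MX_def pbar_def
  by (subst emeasure_distr[OF Xq_meas_K]) (auto simp: emeasure_eq_measure vimage_def Int_def conj_commute)

lemma sets_M0: "sets M0 = sets (count_space K \<Otimes>\<^sub>M borel)"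
  unfolding M0_def MX_def by (intro sets_pair_measure_cong) auto

lemma gd_nonneg: "gd p \<ge> 0"
  unfolding gd_def pbar_def by (auto simp: pz_bounds)

lemma gd_x_meas[measurable]: "(\<lambda>y. gd (x, y)) \<in> borel_measurable borel"
  unfolding gd_def fst_conv snd_conv
  by (cases "pbar x = 0") (simp_all add: borel_measurable_divide)

lemma gd_meas: "gd \<in> borel_measurable M0"
proof -
  have "gd \<in> borel_measurable (count_space K \<Otimes>\<^sub>M borel)"
  proof (rule measurable_pair_measure_countable1)
    show "countable K" using K_finite by (rule countable_finite)
    fix x show "(\<lambda>y. gd (x, y)) \<in> borel_measurable borel" unfolding gd_def fst_conv snd_conv
      by (cases "pbar x = 0") (simp_all add: borel_measurable_divide)
  qed
  then show ?thesis by (simp add: measurable_cong_sets[OF sets_M0 refl])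
qed

lemma Nj_density: "Nj = density M0 (\<lambda>p. ennreal (gd p))"
proof -
  interpret MXp: prob_space MX by (rule MX_prob)
  interpret Sp: prob_space S by (rule S_prob)
  interpret pair_sigma_finite MX S ..
  have XSm: "(\<lambda>\<omega>. (Xq \<omega>, s \<omega>)) \<in> measurable \<Omega> (count_space K \<Otimes>\<^sub>M borel)"
    by (rule measurable_Pair[OF Xq_meas_K s_meas])
  have gm: "(\<lambda>p. ennreal (gd p)) \<in> borel_measurable M0" using gd_meas by measurable
  show ?thesis
  proof (rule pair_measure_ext[of _ MX S])
    show "sets Nj = sets (MX \<Otimes>\<^sub>M S)" unfolding Nj_def MX_def S_def
      by (simp add: sets_pair_measure_cong[symmetric])
    show "sets (density M0 (\<lambda>p. ennreal (gd p))) = sets (MX \<Otimes>\<^sub>M S)" unfolding M0_def by simp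
    show "emeasure Nj (space MX \<times> space S) \<noteq> \<infinity>"
    proof -
      have "prob_space Nj" unfolding Nj_def by (rule prob_space_distr[OF XSm])
      then interpret Nj: prob_space Nj .
      show ?thesis by (simp add: Nj.emeasure_eq_measure)
    qed
    fix A B assume A: "A \<in> sets MX" and B: "B \<in> sets S"
    have AK: "A \<subseteq> K" using A unfolding MX_def by simp
    have finA: "finite A" using AK K_finite finite_subset by blast
    have Bb[measurable]: "B \<in> sets borel" using B by simp
    have AB: "A \<times> B \<in> sets (count_space K \<Otimes>\<^sub>M borel)" using AK Bb by (intro pair_measureI) auto
    have "emeasure Nj (A \<times> B) = emeasure \<Omega> ((\<lambda>\<omega>. (Xq \<omega>, s \<omega>)) -` (A \<times> B) \<inter> space \<Omega>)"
      unfolding Nj_def by (rule emeasure_distr[OF XSm AB])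
    also have "(\<lambda>\<omega>. (Xq \<omega>, s \<omega>)) -` (A \<times> B) \<inter> space \<Omega> = (\<Union>x\<in>A. {\<omega> \<in> space \<Omega>. Xq \<omega> = x \<and> s \<omega> \<in> B})"
      by auto
    also have "emeasure \<Omega> \<dots> = (\<Sum>x\<in>A. emeasure \<Omega> {\<omega> \<in> space \<Omega>. Xq \<omega> = x \<and> s \<omega> \<in> B})"
    proof (rule sum_emeasure[symmetric])
      show "(\<lambda>x. {\<omega> \<in> space \<Omega>. Xq \<omega> = x \<and> s \<omega> \<in> B}) ` A \<subseteq> events"
      proof -
        have "{\<omega> \<in> space \<Omega>. Xq \<omega> = x \<and> s \<omega> \<in> B} \<in> events" for x
        proof -
          have "{\<omega> \<in> space \<Omega>. Xq \<omega> = x \<and> s \<omega> \<in> B} = {\<omega> \<in> space \<Omega>. Xq \<omega> = x} \<inter> (s -` B \<inter> space \<Omega>)" by auto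
          moreover have "s -` B \<inter> space \<Omega> \<in> events" using measurable_sets[OF s_meas Bb] .
          ultimately show ?thesis using Xq_meas_set by auto
        qed
        then show ?thesis by auto
      qed
      show "disjoint_family_on (\<lambda>x. {\<omega> \<in> space \<Omega>. Xq \<omega> = x \<and> s \<omega> \<in> B}) A"
        unfolding disjoint_family_on_def by auto
    qed (rule finA)
    also have "\<dots> = (\<Sum>x\<in>A. \<integral>\<^sup>+\<sigma>. ennreal (pz x \<sigma>) * indicator B \<sigma> \<partial>S)"
      by (intro sum.cong refl key_joint Bb)
    finally have lhs: "emeasure Nj (A \<times> B) = (\<Sum>x\<in>A. \<integral>\<^sup>+\<sigma>. ennreal (pz x \<sigma>) * indicator B \<sigma> \<partial>S)" .
    have ABm: "A \<times> B \<in> sets M0" using AB sets_M0 by simp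
    have "emeasure (density M0 (\<lambda>p. ennreal (gd p))) (A \<times> B) = (\<integral>\<^sup>+p. ennreal (gd p) * indicator (A \<times> B) p \<partial>M0)"
      by (rule emeasure_density[OF gm ABm])
    also have "\<dots> = (\<integral>\<^sup>+x. \<integral>\<^sup>+\<sigma>. ennreal (gd (x, \<sigma>)) * indicator (A \<times> B) (x, \<sigma>) \<partial>S \<partial>MX)"
      unfolding M0_def
      by (rule Sp.nn_integral_fst[symmetric]) (use gm ABm in \<open>simp add: M0_def\<close>)
    also have "\<dots> = (\<integral>\<^sup>+x. (\<integral>\<^sup>+\<sigma>. ennreal (gd (x, \<sigma>)) * indicator B \<sigma> \<partial>S) * indicator A x \<partial>MX)"
      by (intro nn_integral_cong) (auto simp: indicator_def)
    also have "\<dots> = (\<Sum>x\<in>A. (\<integral>\<^sup>+\<sigma>. ennreal (gd (x, \<sigma>)) * indicator B \<sigma> \<partial>S) * emeasure MX {x})"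
      by (rule nn_integral_indicator_finite[OF finA]) (use AK in \<open>auto simp: MX_def\<close>)
    also have "\<dots> = (\<Sum>x\<in>A. \<integral>\<^sup>+\<sigma>. ennreal (pz x \<sigma>) * indicator B \<sigma> \<partial>S)"
    proof (intro sum.cong refl)
      fix x assume xA: "x \<in> A"
      then have xK: "x \<in> K" using AK by auto
      show "(\<integral>\<^sup>+\<sigma>. ennreal (gd (x, \<sigma>)) * indicator B \<sigma> \<partial>S) * emeasure MX {x} = (\<integral>\<^sup>+\<sigma>. ennreal (pz x \<sigma>) * indicator B \<sigma> \<partial>S)"
      proof (cases "pbar x = 0")
        case True
        have "(\<integral>\<^sup>+\<sigma>. ennreal (pz x \<sigma>) * indicator B \<sigma> \<partial>S) \<le> (\<integral>\<^sup>+\<sigma>. ennreal (pz x \<sigma>) \<partial>S)"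
          by (intro nn_integral_mono) (auto simp: indicator_def)
        also have "\<dots> = 0" using pbar_nn[of x] True by simp
        finally show ?thesis using True emeasure_MX[OF xK] by simp
      next
        case False
        have pb: "pbar x > 0" using False unfolding pbar_def by (simp add: less_le)
        have "(\<integral>\<^sup>+\<sigma>. ennreal (gd (x, \<sigma>)) * indicator B \<sigma> \<partial>S) * emeasure MX {x}
            = (\<integral>\<^sup>+\<sigma>. ennreal (gd (x, \<sigma>)) * indicator B \<sigma> * ennreal (pbar x) \<partial>S)"
          unfolding emeasure_MX[OF xK] by (rule nn_integral_multc[symmetric]) (unfold measurable_cong_sets[OF sets_S refl], measurable)
        also have "\<dots> = (\<integral>\<^sup>+\<sigma>. ennreal (pz x \<sigma>) * indicator B \<sigma> \<partial>S)"
        proof (intro nn_integral_cong)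
          fix \<sigma>
          have "ennreal (gd (x, \<sigma>)) * ennreal (pbar x) = ennreal (pz x \<sigma>)"
            using pb pz_bounds[of x \<sigma>] unfolding gd_def by (simp add: ennreal_mult[symmetric])
          then show "ennreal (gd (x, \<sigma>)) * indicator B \<sigma> * ennreal (pbar x) = ennreal (pz x \<sigma>) * indicator B \<sigma>"
            by (simp add: mult.commute mult.left_commute)
        qed
        finally show ?thesis .
      qed
    qed
    finally show "emeasure Nj (A \<times> B) = emeasure (density M0 (\<lambda>p. ennreal (gd p))) (A \<times> B)"
      using lhs by simp
  qed
qed

end

lemma xlnx_abs_bound:
  fixes t :: real assumes "t \<ge> 0" shows "\<bar>t * ln t\<bar> \<le> t\<^sup>2 + 1"
proof (cases "t \<ge> 1")
  case True
  have "0 \<le> t * ln t" using True by simp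
  moreover have "t * ln t \<le> t * (t - 1)" using True ln_le_minus_one[of t] by (intro mult_left_mono) auto
  moreover have "t * (t - 1) = t\<^sup>2 - t" by (simp add: power2_eq_square algebra_simps)
  ultimately show ?thesis using True by linarith
next
  case False
  show ?thesis
  proof (cases "t = 0")
    case False
    then have t0: "t > 0" using assms by simp
    have "t * ln t \<le> 0" using \<open>\<not> 1 \<le> t\<close> t0 by (simp add: mult_nonneg_nonpos)
    moreover have "- (t * ln t) \<le> 1"
    proof -
      have "- (t * ln t) = t * ln (1 / t)" using t0 by (simp add: ln_div)
      also have "\<dots> \<le> t * (1 / t - 1)" using t0 ln_le_minus_one[of "1/t"] by (intro mult_left_mono) auto
      also have "\<dots> \<le> 1" using t0 by (simp add: field_simps)
      finally show ?thesis .
    qed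
    ultimately have "\<bar>t * ln t\<bar> \<le> 1" unfolding abs_le_iff by linarith
    moreover have "t\<^sup>2 \<ge> 0" by simp
    ultimately show ?thesis by linarith
  qed simp
qed

context jam
begin

lemma M0_prob: "prob_space M0"
proof -
  interpret MXp: prob_space MX by (rule MX_prob)
  interpret Sp: prob_space S by (rule S_prob)
  interpret pair_prob_space MX S ..
  show ?thesis unfolding M0_def by (rule P.prob_space_axioms)
qed

lemma MI_KL:
  "mutual_information 2 (count_space K) borel Xq s = (\<integral>p. gd p * log 2 (gd p) \<partial>M0)"
proof -
  interpret M0p: prob_space M0 by (rule M0_prob)
  have "mutual_information 2 (count_space K) borel Xq s = KL_divergence 2 M0 Nj"
    unfolding mutual_information_def M0_def MX_def S_def Nj_def ..
  also have "\<dots> = KL_divergence 2 M0 (density M0 (\<lambda>p. ennreal (gd p)))" unfolding Nj_density ..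
  also have "\<dots> = (\<integral>p. gd p * log 2 (gd p) \<partial>M0)"
    by (rule M0p.KL_density) (auto simp: gd_meas gd_nonneg)
  finally show ?thesis .
qed

definition Gb where "Gb = (\<Sum>x\<in>K. (if pbar x = 0 then 0 else 1 / pbar x))"

lemma pbar_nonneg: "pbar x \<ge> 0" unfolding pbar_def by simp

lemma gd_le: "x \<in> K \<Longrightarrow> gd (x, \<sigma>) \<le> Gb"
proof -
  assume xK: "x \<in> K"
  have "gd (x, \<sigma>) \<le> (if pbar x = 0 then 0 else 1 / pbar x)"
    unfolding gd_def using pz_bounds[of x \<sigma>] pbar_nonneg[of x] by (auto intro: divide_right_mono)
  also have "\<dots> \<le> Gb" unfolding Gb_def
    by (rule member_le_sum[OF xK]) (auto simp: pbar_nonneg K_finite)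
  finally show ?thesis .
qed

lemma space_M0: "space M0 = K \<times> UNIV"
  unfolding M0_def MX_def by (simp add: space_pair_measure)

lemma h_integrable: "integrable M0 (\<lambda>p. gd p * log 2 (gd p))"
proof -
  interpret M0p: prob_space M0 by (rule M0_prob)
  show ?thesis
  proof (rule M0p.integrable_const_bound[where B="(Gb\<^sup>2 + 1) / ln 2"])
    show "AE p in M0. norm (gd p * log 2 (gd p)) \<le> (Gb\<^sup>2 + 1) / ln 2"
    proof (rule AE_I2)
      fix p assume "p \<in> space M0"
      then have pK: "fst p \<in> K" using space_M0 by auto
      have g0: "gd p \<ge> 0" by (rule gd_nonneg)
      have gG: "gd p \<le> Gb" using gd_le[OF pK, of "snd p"] by simp
      have "norm (gd p * log 2 (gd p)) = \<bar>gd p * ln (gd p)\<bar> / ln 2"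
        by (simp add: log_def abs_mult abs_divide)
      also have "\<dots> \<le> ((gd p)\<^sup>2 + 1) / ln 2"
        by (rule divide_right_mono[OF xlnx_abs_bound[OF g0]]) simp
      also have "\<dots> \<le> (Gb\<^sup>2 + 1) / ln 2"
        using g0 gG by (intro divide_right_mono add_right_mono power_mono) auto
      finally show "norm (gd p * log 2 (gd p)) \<le> (Gb\<^sup>2 + 1) / ln 2" .
    qed
    show "(\<lambda>p. gd p * log 2 (gd p)) \<in> borel_measurable M0" using gd_meas by measurable
  qed
qed

lemma MI_sum:
  "(\<integral>p. gd p * log 2 (gd p) \<partial>M0) = (\<Sum>x\<in>K. pbar x * (\<integral>\<sigma>. gd (x, \<sigma>) * log 2 (gd (x, \<sigma>)) \<partial>S))"
proof -
  interpret MXp: prob_space MX by (rule MX_prob)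
  interpret Sp: prob_space S by (rule S_prob)
  interpret pair_prob_space MX S ..
  have "(\<integral>p. gd p * log 2 (gd p) \<partial>M0) = (\<integral>x. (\<integral>\<sigma>. gd (x, \<sigma>) * log 2 (gd (x, \<sigma>)) \<partial>S) \<partial>MX)"
    unfolding M0_def by (rule integral_fst'[symmetric]) (use h_integrable in \<open>simp add: M0_def\<close>)
  also have "\<dots> = (\<integral>x. (\<integral>\<sigma>. gd (x, \<sigma>) * log 2 (gd (x, \<sigma>)) \<partial>S) * indicator K x \<partial>MX)"
    by (rule Bochner_Integration.integral_cong) (auto simp: MX_def indicator_def)
  also have "\<dots> = (\<Sum>x\<in>K. (\<integral>\<sigma>. gd (x, \<sigma>) * log 2 (gd (x, \<sigma>)) \<partial>S) * measure MX {x})"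
    by (rule integral_indicator_finite_real[OF K_finite]) (auto simp: MX_def emeasure_MX[unfolded MX_def])
  also have "\<dots> = (\<Sum>x\<in>K. pbar x * (\<integral>\<sigma>. gd (x, \<sigma>) * log 2 (gd (x, \<sigma>)) \<partial>S))"
  proof (intro sum.cong refl)
    fix x assume "x \<in> K"
    then have "measure MX {x} = pbar x" using emeasure_MX[of x] pbar_nonneg[of x] by (simp add: measure_def)
    then show "(\<integral>\<sigma>. gd (x, \<sigma>) * log 2 (gd (x, \<sigma>)) \<partial>S) * measure MX {x} = pbar x * (\<integral>\<sigma>. gd (x, \<sigma>) * log 2 (gd (x, \<sigma>)) \<partial>S)"
      by simp
  qed
  finally show ?thesis .
qed

end

context jam
begin

lemma pz_meas_S[measurable]: "(\<lambda>\<sigma>. pz x \<sigma>) \<in> borel_measurable S"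
  using pz_meas by (simp add: measurable_cong_sets[OF sets_S refl])

lemma term_bound:
  assumes tau: "0 < \<tau>" "\<tau> \<le> 1"
  shows "pbar x * (\<integral>\<sigma>. gd (x, \<sigma>) * log 2 (gd (x, \<sigma>)) \<partial>S)
    \<le> (\<tau> - ln \<tau> * (\<integral>\<sigma>. \<bar>pz x \<sigma> - pbar x\<bar> \<partial>S)) / ln 2"
proof -
  interpret Sp: prob_space S by (rule S_prob)
  define p where "p = pbar x"
  have p0: "p \<ge> 0" unfolding p_def by (rule pbar_nonneg)
  have p1: "p \<le> 1" unfolding p_def pbar_def by simp
  have lnt: "- ln \<tau> \<ge> 0" using tau by simp
  have int_abs: "integrable S (\<lambda>\<sigma>. \<bar>pz x \<sigma> - p\<bar>)"
  proof (rule Sp.integrable_const_bound[where B=2])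
    show "AE \<sigma> in S. norm (\<bar>pz x \<sigma> - p\<bar>) \<le> 2"
    proof (rule AE_I2)
      fix \<sigma> show "norm (\<bar>pz x \<sigma> - p\<bar>) \<le> 2" using pz_bounds[of x \<sigma>] p0 p1 by auto
    qed
  qed measurable
  have rhs0: "0 \<le> (\<tau> - ln \<tau> * (\<integral>\<sigma>. \<bar>pz x \<sigma> - p\<bar> \<partial>S)) / ln 2"
  proof -
    have "0 \<le> (\<integral>\<sigma>. \<bar>pz x \<sigma> - p\<bar> \<partial>S)" by simp
    then have "0 \<le> - ln \<tau> * (\<integral>\<sigma>. \<bar>pz x \<sigma> - p\<bar> \<partial>S)" by (rule mult_nonneg_nonneg[OF lnt])
    then show ?thesis using tau by simp
  qed
  show ?thesis
  proof (cases "p = 0")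
    case True
    then show ?thesis using rhs0 unfolding p_def by simp
  next
    case False
    then have pp: "p > 0" using p0 by simp
    have eq1: "pbar x * (\<integral>\<sigma>. gd (x, \<sigma>) * log 2 (gd (x, \<sigma>)) \<partial>S) = (\<integral>\<sigma>. pz x \<sigma> * ln (pz x \<sigma> / p) \<partial>S) / ln 2"
    proof -
      have "pbar x * (\<integral>\<sigma>. gd (x, \<sigma>) * log 2 (gd (x, \<sigma>)) \<partial>S) = (\<integral>\<sigma>. p * (gd (x, \<sigma>) * log 2 (gd (x, \<sigma>))) \<partial>S)"
        unfolding p_def by simp
      also have "\<dots> = (\<integral>\<sigma>. pz x \<sigma> * ln (pz x \<sigma> / p) / ln 2 \<partial>S)"
      proof (rule Bochner_Integration.integral_cong[OF refl])
        fix \<sigma>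
        have "gd (x, \<sigma>) = pz x \<sigma> / p" unfolding gd_def p_def using False p_def by simp
        then show "p * (gd (x, \<sigma>) * log 2 (gd (x, \<sigma>))) = pz x \<sigma> * ln (pz x \<sigma> / p) / ln 2"
          using pp by (simp add: log_def)
      qed
      also have "\<dots> = (\<integral>\<sigma>. pz x \<sigma> * ln (pz x \<sigma> / p) \<partial>S) / ln 2" by simp
      finally show ?thesis .
    qed
    have int_eta: "integrable S (\<lambda>\<sigma>. pz x \<sigma> * ln (pz x \<sigma>) - p * ln p)"
    proof (rule Sp.integrable_const_bound[where B="2 + \<bar>p * ln p\<bar>"])
      show "AE \<sigma> in S. norm (pz x \<sigma> * ln (pz x \<sigma>) - p * ln p) \<le> 2 + \<bar>p * ln p\<bar>"
      proof (rule AE_I2)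
        fix \<sigma>
        have "\<bar>pz x \<sigma> * ln (pz x \<sigma>)\<bar> \<le> (pz x \<sigma>)\<^sup>2 + 1" by (rule xlnx_abs_bound) (simp add: pz_bounds)
        moreover have "(pz x \<sigma>)\<^sup>2 \<le> 1" using pz_bounds[of x \<sigma>] by (simp add: power_le_one)
        ultimately show "norm (pz x \<sigma> * ln (pz x \<sigma>) - p * ln p) \<le> 2 + \<bar>p * ln p\<bar>" by simp
      qed
    qed measurable
    have int_lin: "integrable S (\<lambda>\<sigma>. (p - pz x \<sigma>) * ln p)"
      using pz_integrable[of x] by simp
    have eq2: "(\<integral>\<sigma>. pz x \<sigma> * ln (pz x \<sigma> / p) \<partial>S)
        = (\<integral>\<sigma>. (pz x \<sigma> * ln (pz x \<sigma>) - p * ln p) + (p - pz x \<sigma>) * ln p \<partial>S)"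
    proof (rule Bochner_Integration.integral_cong[OF refl])
      fix \<sigma>
      show "pz x \<sigma> * ln (pz x \<sigma> / p) = (pz x \<sigma> * ln (pz x \<sigma>) - p * ln p) + (p - pz x \<sigma>) * ln p"
      proof (cases "pz x \<sigma> = 0")
        case True then show ?thesis by simp
      next
        case False
        then have "pz x \<sigma> > 0" using pz_bounds[of x \<sigma>] by simp
        then show ?thesis using pp by (simp add: ln_div algebra_simps)
      qed
    qed
    also have "\<dots> = (\<integral>\<sigma>. pz x \<sigma> * ln (pz x \<sigma>) - p * ln p \<partial>S) + (\<integral>\<sigma>. (p - pz x \<sigma>) * ln p \<partial>S)"
      by (rule Bochner_Integration.integral_add[OF int_eta int_lin])
    also have "(\<integral>\<sigma>. (p - pz x \<sigma>) * ln p \<partial>S) = 0"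
    proof -
      have "(\<integral>\<sigma>. (p - pz x \<sigma>) * ln p \<partial>S) = (\<integral>\<sigma>. p - pz x \<sigma> \<partial>S) * ln p" by simp
      also have "(\<integral>\<sigma>. p - pz x \<sigma> \<partial>S) = p - (\<integral>\<sigma>. pz x \<sigma> \<partial>S)"
        using pz_integrable[of x] by (simp add: Bochner_Integration.integral_diff Sp.prob_space[unfolded space_S])
      also have "\<dots> = 0" unfolding p_def pbar_int by simp
      finally show ?thesis by simp
    qed
    finally have eq3: "(\<integral>\<sigma>. pz x \<sigma> * ln (pz x \<sigma> / p) \<partial>S) = (\<integral>\<sigma>. pz x \<sigma> * ln (pz x \<sigma>) - p * ln p \<partial>S)" by simp
    have "(\<integral>\<sigma>. pz x \<sigma> * ln (pz x \<sigma>) - p * ln p \<partial>S) \<le> (\<integral>\<sigma>. \<tau> - \<bar>pz x \<sigma> - p\<bar> * ln \<tau> \<partial>S)"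
    proof (rule integral_mono[OF int_eta])
      show "integrable S (\<lambda>\<sigma>. \<tau> - \<bar>pz x \<sigma> - p\<bar> * ln \<tau>)" using int_abs by simp
      fix \<sigma>
      have "\<bar>pz x \<sigma> * ln (pz x \<sigma>) - p * ln p\<bar> \<le> \<tau> - \<bar>pz x \<sigma> - p\<bar> * ln \<tau>"
        by (rule eta_bound) (use pz_bounds[of x \<sigma>] p0 p1 tau in auto)
      then show "pz x \<sigma> * ln (pz x \<sigma>) - p * ln p \<le> \<tau> - \<bar>pz x \<sigma> - p\<bar> * ln \<tau>" by simp
    qed
    also have "\<dots> = \<tau> - ln \<tau> * (\<integral>\<sigma>. \<bar>pz x \<sigma> - p\<bar> \<partial>S)"
      using int_abs by (simp add: Bochner_Integration.integral_diff Sp.prob_space[unfolded space_S] mult.commute)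
    finally have "(\<integral>\<sigma>. pz x \<sigma> * ln (pz x \<sigma> / p) \<partial>S) \<le> \<tau> - ln \<tau> * (\<integral>\<sigma>. \<bar>pz x \<sigma> - p\<bar> \<partial>S)"
      using eq3 by simp
    then show ?thesis unfolding eq1 p_def by (simp add: divide_right_mono)
  qed
qed

end

context jam
begin

lemma cmod_nth_meas[measurable]: "(\<lambda>\<sigma>::complex^'u. cmod (\<sigma> $ u)) \<in> borel_measurable borel"
  by (intro borel_measurable_continuous_onI continuous_intros)

lemma cmod_s_int: "integrable S (\<lambda>\<sigma>. cmod (\<sigma> $ u))" and cmod_s_le: "(\<integral>\<sigma>. cmod (\<sigma> $ u) \<partial>S) \<le> 1"
proof -
  interpret Sp: prob_space S by (rule S_prob)
  have sq_int: "integrable S (\<lambda>\<sigma>. (cmod (\<sigma> $ u))\<^sup>2)"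
    unfolding S_def by (subst integrable_distr_eq) (auto simp: s_power_int)
  have sq_le: "(\<integral>\<sigma>. (cmod (\<sigma> $ u))\<^sup>2 \<partial>S) \<le> 1"
    unfolding S_def by (subst integral_distr) (auto simp: s_power)
  have b_int: "integrable S (\<lambda>\<sigma>. (1 + (cmod (\<sigma> $ u))\<^sup>2) / 2)" using sq_int by simp
  have pt: "cmod (\<sigma> $ u) \<le> (1 + (cmod (\<sigma> $ u))\<^sup>2) / 2" for \<sigma>
  proof -
    have "0 \<le> (cmod (\<sigma> $ u) - 1)\<^sup>2" by simp
    then show ?thesis by (simp add: power2_eq_square algebra_simps)
  qed
  show int: "integrable S (\<lambda>\<sigma>. cmod (\<sigma> $ u))"
  proof (rule Bochner_Integration.integrable_bound[OF b_int])
    show "(\<lambda>\<sigma>. cmod (\<sigma> $ u)) \<in> borel_measurable S" by (simp add: measurable_cong_sets[OF sets_S refl])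
    show "AE \<sigma> in S. norm (cmod (\<sigma> $ u)) \<le> norm ((1 + (cmod (\<sigma> $ u))\<^sup>2) / 2)"
    proof (rule AE_I2)
      fix \<sigma>
      have "0 \<le> (1 + (cmod (\<sigma> $ u))\<^sup>2) / 2" by simp
      then show "norm (cmod (\<sigma> $ u)) \<le> norm ((1 + (cmod (\<sigma> $ u))\<^sup>2) / 2)" using pt[of \<sigma>] by simp
    qed
  qed
  have "(\<integral>\<sigma>. cmod (\<sigma> $ u) \<partial>S) \<le> (\<integral>\<sigma>. (1 + (cmod (\<sigma> $ u))\<^sup>2) / 2 \<partial>S)"
    by (rule integral_mono[OF int b_int pt])
  also have "\<dots> = (1 + (\<integral>\<sigma>. (cmod (\<sigma> $ u))\<^sup>2 \<partial>S)) / 2"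
    using sq_int by (simp add: Bochner_Integration.integral_add Sp.prob_space[unfolded space_S])
  also have "\<dots> \<le> 1" using sq_le by simp
  finally show "(\<integral>\<sigma>. cmod (\<sigma> $ u) \<partial>S) \<le> 1" .
qed

lemma reim_H_le: "\<bar>reim_comp (H *v \<sigma>) c\<bar> \<le> (\<Sum>u\<in>UNIV. cmod (H $ fst c $ u) * cmod (\<sigma> $ u))"
proof -
  have "\<bar>reim_comp (H *v \<sigma>) c\<bar> \<le> cmod ((H *v \<sigma>) $ fst c)" by (rule abs_reim_comp)
  also have "(H *v \<sigma>) $ fst c = (\<Sum>u\<in>UNIV. H $ fst c $ u * \<sigma> $ u)"
    by (simp add: matrix_vector_mult_def)
  also have "cmod \<dots> \<le> (\<Sum>u\<in>UNIV. cmod (H $ fst c $ u * \<sigma> $ u))" by (rule norm_sum)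
  finally show ?thesis by (simp add: norm_mult)
qed

definition CH where
  "CH = (\<Sum>c\<in>(UNIV :: ('b \<times> reim) set). 44 / norm (J $ fst c) * (\<Sum>u\<in>UNIV. cmod (H $ fst c $ u)))"

definition FF where
  "FF \<sigma> = (\<Sum>c\<in>(UNIV :: ('b \<times> reim) set). real m * (44 * \<bar>reim_comp (H *v \<sigma>) c\<bar> / (norm (J $ fst c) * sqrt \<rho>)))"

lemma reim_H_int: "integrable S (\<lambda>\<sigma>. \<bar>reim_comp (H *v \<sigma>) c\<bar>)"
proof (rule Bochner_Integration.integrable_bound)
  show "integrable S (\<lambda>\<sigma>. \<Sum>u\<in>UNIV. cmod (H $ fst c $ u) * cmod (\<sigma> $ u))"
    using cmod_s_int by (intro Bochner_Integration.integrable_sum integrable_mult_right) auto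
  show "(\<lambda>\<sigma>. \<bar>reim_comp (H *v \<sigma>) c\<bar>) \<in> borel_measurable S"
    by (simp add: measurable_cong_sets[OF sets_S refl])
  show "AE \<sigma> in S. norm \<bar>reim_comp (H *v \<sigma>) c\<bar> \<le> norm (\<Sum>u\<in>UNIV. cmod (H $ fst c $ u) * cmod (\<sigma> $ u))"
  proof (rule AE_I2)
    fix \<sigma>
    have "0 \<le> (\<Sum>u\<in>UNIV. cmod (H $ fst c $ u) * cmod (\<sigma> $ u))" by (intro sum_nonneg) auto
    then show "norm \<bar>reim_comp (H *v \<sigma>) c\<bar> \<le> norm (\<Sum>u\<in>UNIV. cmod (H $ fst c $ u) * cmod (\<sigma> $ u))"
      using reim_H_le[of \<sigma> c] by simp
  qed
qed

lemma FF_int: "integrable S FF"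
  unfolding FF_def using reim_H_int by (intro Bochner_Integration.integrable_sum integrable_mult_right integrable_divide) auto

lemma FF_le: "(\<integral>\<sigma>. FF \<sigma> \<partial>S) \<le> real m * CH / sqrt \<rho>"
proof -
  have "(\<integral>\<sigma>. FF \<sigma> \<partial>S) = (\<Sum>c\<in>UNIV. real m * (44 * (\<integral>\<sigma>. \<bar>reim_comp (H *v \<sigma>) c\<bar> \<partial>S) / (norm (J $ fst c) * sqrt \<rho>)))"
    unfolding FF_def using reim_H_int
    by (subst Bochner_Integration.integral_sum) (auto intro!: integrable_mult_right integrable_divide)
  also have "\<dots> \<le> (\<Sum>c\<in>(UNIV :: ('b \<times> reim) set). real m * (44 * (\<Sum>u\<in>UNIV. cmod (H $ fst c $ u)) / (norm (J $ fst c) * sqrt \<rho>)))"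
  proof (rule Groups_Big.sum_mono)
    fix c :: "'b \<times> reim"
    assume "c \<in> UNIV"
    have "(\<integral>\<sigma>. \<bar>reim_comp (H *v \<sigma>) c\<bar> \<partial>S) \<le> (\<integral>\<sigma>. (\<Sum>u\<in>UNIV. cmod (H $ fst c $ u) * cmod (\<sigma> $ u)) \<partial>S)"
      using cmod_s_int by (intro integral_mono reim_H_int reim_H_le Bochner_Integration.integrable_sum integrable_mult_right) auto
    also have "\<dots> = (\<Sum>u\<in>UNIV. cmod (H $ fst c $ u) * (\<integral>\<sigma>. cmod (\<sigma> $ u) \<partial>S))"
      using cmod_s_int by (subst Bochner_Integration.integral_sum) auto
    also have "\<dots> \<le> (\<Sum>u\<in>UNIV. cmod (H $ fst c $ u) * 1)"
      using cmod_s_le by (intro sum_mono mult_left_mono) auto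
    finally have I: "(\<integral>\<sigma>. \<bar>reim_comp (H *v \<sigma>) c\<bar> \<partial>S) \<le> (\<Sum>u\<in>UNIV. cmod (H $ fst c $ u))" by simp
    have d0: "0 \<le> norm (J $ fst c) * sqrt \<rho>" using rho by simp
    have "44 * (\<integral>\<sigma>. \<bar>reim_comp (H *v \<sigma>) c\<bar> \<partial>S) / (norm (J $ fst c) * sqrt \<rho>)
        \<le> 44 * (\<Sum>u\<in>UNIV. cmod (H $ fst c $ u)) / (norm (J $ fst c) * sqrt \<rho>)"
      using I d0 by (intro Fields.divide_right_mono) auto
    then show "real m * (44 * (\<integral>\<sigma>. \<bar>reim_comp (H *v \<sigma>) c\<bar> \<partial>S) / (norm (J $ fst c) * sqrt \<rho>))
        \<le> real m * (44 * (\<Sum>u\<in>UNIV. cmod (H $ fst c $ u)) / (norm (J $ fst c) * sqrt \<rho>))"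
      by (intro mult_left_mono) auto
  qed
  also have "\<dots> = real m * CH / sqrt \<rho>"
    unfolding CH_def by (simp add: sum_distrib_left sum_divide_distrib field_simps)
  finally show ?thesis .
qed

end

context jam
begin

lemma pz_diff_sum: "(\<Sum>x\<in>K. \<bar>pz x \<sigma> - pz x 0\<bar>) \<le> 2 * FF \<sigma>"
proof -
  define A where "A = (\<lambda>x. {\<omega> \<in> space \<Omega>. qz \<sigma> (Z \<omega>) = x})"
  define B where "B = (\<lambda>x. {\<omega> \<in> space \<Omega>. qz 0 (Z \<omega>) = x})"
  define E where "E = {\<omega> \<in> space \<Omega>. qz \<sigma> (Z \<omega>) \<noteq> qz 0 (Z \<omega>)}"
  have Am: "A x \<in> events" for x unfolding A_def by (rule qzZ_meas_set)
  have Bm: "B x \<in> events" for x unfolding B_def by (rule qzZ_meas_set)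
  have Em: "E \<in> events"
  proof -
    have eq: "E = (\<Union>c\<in>UNIV. {\<omega> \<in> space \<Omega>. Qf c (reim_comp (H *v \<sigma> + Z \<omega>) c) \<noteq> Qf c (reim_comp (H *v 0 + Z \<omega>) c)})"
      unfolding E_def qz_def quantize_def by (auto simp: fun_eq_iff)
    have "{\<omega> \<in> space \<Omega>. Qf c (reim_comp (H *v \<sigma> + Z \<omega>) c) \<noteq> Qf c (reim_comp (H *v 0 + Z \<omega>) c)} \<in> events" for c
    proof -
      have [measurable]: "Qf c \<in> borel_measurable borel" by (rule quant_meas[OF quant])
      show ?thesis by measurable
    qed
    then show ?thesis unfolding eq by (intro sets.finite_UN finite_C) auto
  qed
  have pt: "\<bar>pz x \<sigma> - pz x 0\<bar> \<le> prob (A x - B x) + prob (B x - A x)" for x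
  proof -
    have e1: "pz x \<sigma> = prob (A x)" "pz x 0 = prob (B x)" unfolding pz_def A_def B_def by simp_all
    have e2: "prob (A x - B x) = prob (A x) - prob (A x \<inter> B x)" by (rule finite_measure_Diff'[OF Am Bm])
    have e3: "prob (B x - A x) = prob (B x) - prob (A x \<inter> B x)"
      using finite_measure_Diff'[OF Bm Am] by (simp add: Int_commute)
    have e4: "prob (A x \<inter> B x) \<le> prob (A x)" "prob (A x \<inter> B x) \<le> prob (B x)"
      using Am Bm by (auto intro!: finite_measure_mono)
    show ?thesis unfolding e1 e2 e3 abs_le_iff using e4 by linarith
  qed
  have s1: "(\<Sum>x\<in>K. prob (A x - B x)) \<le> prob E"
  proof -
    have "(\<Sum>x\<in>K. prob (A x - B x)) = prob (\<Union>x\<in>K. A x - B x)"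
      by (rule finite_measure_finite_Union[symmetric]) (use K_finite Am Bm in \<open>auto simp: disjoint_family_on_def A_def B_def\<close>)
    also have "\<dots> \<le> prob E" using Em by (intro finite_measure_mono) (auto simp: A_def B_def E_def)
    finally show ?thesis .
  qed
  have s2: "(\<Sum>x\<in>K. prob (B x - A x)) \<le> prob E"
  proof -
    have "(\<Sum>x\<in>K. prob (B x - A x)) = prob (\<Union>x\<in>K. B x - A x)"
      by (rule finite_measure_finite_Union[symmetric]) (use K_finite Am Bm in \<open>auto simp: disjoint_family_on_def A_def B_def\<close>)
    also have "\<dots> \<le> prob E" using Em by (intro finite_measure_mono) (auto simp: A_def B_def E_def)
    finally show ?thesis .
  qed
  have "(\<Sum>x\<in>K. \<bar>pz x \<sigma> - pz x 0\<bar>) \<le> (\<Sum>x\<in>K. prob (A x - B x) + prob (B x - A x))"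
    by (rule sum_mono[OF pt])
  also have "\<dots> \<le> 2 * prob E" using s1 s2 by (simp add: sum.distrib)
  also have "prob E \<le> FF \<sigma>" unfolding E_def FF_def by (rule flip_all)
  finally show ?thesis by simp
qed

lemma pz0_int: "integrable S (\<lambda>\<sigma>. \<bar>pz x \<sigma> - pz x 0\<bar>)"
proof -
  interpret Sp: prob_space S by (rule S_prob)
  show ?thesis
  proof (rule Sp.integrable_const_bound[where B=2])
    show "AE \<sigma> in S. norm (\<bar>pz x \<sigma> - pz x 0\<bar>) \<le> 2"
    proof (rule AE_I2)
      fix \<sigma> show "norm (\<bar>pz x \<sigma> - pz x 0\<bar>) \<le> 2" using pz_bounds[of x \<sigma>] pz_bounds[of x 0] by auto
    qed
  qed measurable
qed

lemma pbar_int_bound: "(\<integral>\<sigma>. \<bar>pz x \<sigma> - pbar x\<bar> \<partial>S) \<le> 2 * (\<integral>\<sigma>. \<bar>pz x \<sigma> - pz x 0\<bar> \<partial>S)"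
proof -
  interpret Sp: prob_space S by (rule S_prob)
  define a where "a = (\<integral>\<sigma>. \<bar>pz x \<sigma> - pz x 0\<bar> \<partial>S)"
  have "\<bar>pbar x - pz x 0\<bar> = \<bar>\<integral>\<sigma>. pz x \<sigma> - pz x 0 \<partial>S\<bar>"
    unfolding pbar_int using pz_integrable[of x]
    by (simp add: Bochner_Integration.integral_diff Sp.prob_space[unfolded space_S])
  also have "\<dots> \<le> a" unfolding a_def by (rule integral_abs_bound)
  finally have pa: "\<bar>pbar x - pz x 0\<bar> \<le> a" .
  have int2: "integrable S (\<lambda>\<sigma>. \<bar>pz x \<sigma> - pbar x\<bar>)"
  proof (rule Sp.integrable_const_bound[where B=2])
    show "AE \<sigma> in S. norm (\<bar>pz x \<sigma> - pbar x\<bar>) \<le> 2"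
    proof (rule AE_I2)
      fix \<sigma>
      have "pbar x \<le> 1" "pbar x \<ge> 0" unfolding pbar_def by auto
      then show "norm (\<bar>pz x \<sigma> - pbar x\<bar>) \<le> 2" using pz_bounds[of x \<sigma>] by auto
    qed
  qed measurable
  have "(\<integral>\<sigma>. \<bar>pz x \<sigma> - pbar x\<bar> \<partial>S) \<le> (\<integral>\<sigma>. \<bar>pz x \<sigma> - pz x 0\<bar> + a \<partial>S)"
  proof (rule integral_mono[OF int2])
    show "integrable S (\<lambda>\<sigma>. \<bar>pz x \<sigma> - pz x 0\<bar> + a)" using pz0_int by simp
    fix \<sigma> show "\<bar>pz x \<sigma> - pbar x\<bar> \<le> \<bar>pz x \<sigma> - pz x 0\<bar> + a" using pa by linarith
  qed
  also have "\<dots> = a + a"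
    using pz0_int[of x] unfolding a_def by (simp add: Bochner_Integration.integral_add Sp.prob_space[unfolded space_S])
  finally show ?thesis unfolding a_def by simp
qed

lemma D_total: "(\<Sum>x\<in>K. \<integral>\<sigma>. \<bar>pz x \<sigma> - pbar x\<bar> \<partial>S) \<le> 4 * (real m * CH / sqrt \<rho>)"
proof -
  have "(\<Sum>x\<in>K. \<integral>\<sigma>. \<bar>pz x \<sigma> - pbar x\<bar> \<partial>S) \<le> (\<Sum>x\<in>K. 2 * (\<integral>\<sigma>. \<bar>pz x \<sigma> - pz x 0\<bar> \<partial>S))"
    by (rule sum_mono[OF pbar_int_bound])
  also have "\<dots> = 2 * (\<integral>\<sigma>. (\<Sum>x\<in>K. \<bar>pz x \<sigma> - pz x 0\<bar>) \<partial>S)"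
    using pz0_int by (simp add: Bochner_Integration.integral_sum sum_distrib_left)
  also have "(\<integral>\<sigma>. (\<Sum>x\<in>K. \<bar>pz x \<sigma> - pz x 0\<bar>) \<partial>S) \<le> (\<integral>\<sigma>. 2 * FF \<sigma> \<partial>S)"
    using pz0_int FF_int by (intro integral_mono pz_diff_sum Bochner_Integration.integrable_sum) auto
  also have "(\<integral>\<sigma>. 2 * FF \<sigma> \<partial>S) = 2 * (\<integral>\<sigma>. FF \<sigma> \<partial>S)" by simp
  finally have "(\<Sum>x\<in>K. \<integral>\<sigma>. \<bar>pz x \<sigma> - pbar x\<bar> \<partial>S) \<le> 4 * (\<integral>\<sigma>. FF \<sigma> \<partial>S)" by simp
  also have "\<dots> \<le> 4 * (real m * CH / sqrt \<rho>)" using FF_le by simp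
  finally show ?thesis .
qed

lemma MI_bound:
  assumes tau: "0 < \<tau>" "\<tau> \<le> 1"
  shows "mutual_information 2 (count_space K) borel Xq s
    \<le> (real m ^ (2 * CARD('b)) * \<tau> + (- ln \<tau>) * (4 * (real m * CH / sqrt \<rho>))) / ln 2"
proof -
  have "mutual_information 2 (count_space K) borel Xq s = (\<Sum>x\<in>K. pbar x * (\<integral>\<sigma>. gd (x, \<sigma>) * log 2 (gd (x, \<sigma>)) \<partial>S))"
    using MI_KL MI_sum by simp
  also have "\<dots> \<le> (\<Sum>x\<in>K. (\<tau> - ln \<tau> * (\<integral>\<sigma>. \<bar>pz x \<sigma> - pbar x\<bar> \<partial>S)) / ln 2)"
    by (rule sum_mono[OF term_bound[OF tau]])
  also have "\<dots> = (real (card K) * \<tau> + (- ln \<tau>) * (\<Sum>x\<in>K. \<integral>\<sigma>. \<bar>pz x \<sigma> - pbar x\<bar> \<partial>S)) / ln 2"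
    by (simp add: sum_divide_distrib[symmetric] sum_subtractf sum_distrib_left sum_negf)
  also have "\<dots> \<le> (real m ^ (2 * CARD('b)) * \<tau> + (- ln \<tau>) * (4 * (real m * CH / sqrt \<rho>))) / ln 2"
  proof (rule divide_right_mono)
    have "real (card K) \<le> real m ^ (2 * CARD('b))" using K_card by (metis of_nat_le_iff of_nat_power)
    then have "real (card K) * \<tau> \<le> real m ^ (2 * CARD('b)) * \<tau>" using tau by (intro mult_right_mono) auto
    moreover have "(- ln \<tau>) * (\<Sum>x\<in>K. \<integral>\<sigma>. \<bar>pz x \<sigma> - pbar x\<bar> \<partial>S) \<le> (- ln \<tau>) * (4 * (real m * CH / sqrt \<rho>))"
      using tau D_total by (intro mult_left_mono) auto
    ultimately show "real (card K) * \<tau> + (- ln \<tau>) * (\<Sum>x\<in>K. \<integral>\<sigma>. \<bar>pz x \<sigma> - pbar x\<bar> \<partial>S)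
        \<le> real m ^ (2 * CARD('b)) * \<tau> + (- ln \<tau>) * (4 * (real m * CH / sqrt \<rho>))" by linarith
  qed simp
  finally show ?thesis .
qed

end

context jam
begin

lemma MI_final:
  assumes tau: "0 < \<tau>" "\<tau> \<le> 1"
  shows "prob_space.mutual_information \<Omega> 2
      (count_space ((\<lambda>\<omega>. quantize Qf (rx_signal H J (s \<omega>) (w \<omega>) (n \<omega>))) ` space \<Omega>)) borel
      (\<lambda>\<omega>. quantize Qf (rx_signal H J (s \<omega>) (w \<omega>) (n \<omega>))) s
    \<le> (real m ^ (2 * CARD('b)) * \<tau> + (- ln \<tau>) * (4 * (real m *
        (\<Sum>c\<in>(UNIV :: ('b \<times> reim) set). 44 / norm (J $ fst c) * (\<Sum>u\<in>UNIV. cmod (H $ fst c $ u))) / sqrt \<rho>))) / ln 2"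
proof -
  have eq: "(\<lambda>\<omega>. quantize Qf (rx_signal H J (s \<omega>) (w \<omega>) (n \<omega>))) = Xq"
    by (rule ext) (simp add: X_eq Xq_def)
  show ?thesis unfolding eq K_def[symmetric] using MI_bound[OF tau] unfolding CH_def .
qed

end

theorem proposition2:
  fixes H :: "complex ^ 'u ^ 'b" and J :: "complex ^ 'i ^ 'b" and N0 :: real
    and P :: "real \<Rightarrow> 'a measure"
    and s :: "real \<Rightarrow> 'a \<Rightarrow> complex ^ 'u"
    and w :: "real \<Rightarrow> 'a \<Rightarrow> complex ^ 'i"
    and n :: "real \<Rightarrow> 'a \<Rightarrow> complex ^ 'b"
    and Q :: "real \<Rightarrow> 'b \<times> reim \<Rightarrow> real \<Rightarrow> real"
    and M :: "real \<Rightarrow> nat"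
  assumes N0_pos: "N0 > 0"
    and prob: "\<And>\<rho>. \<rho> > 0 \<Longrightarrow> prob_space (P \<rho>)"
    and s_meas: "\<And>\<rho>. \<rho> > 0 \<Longrightarrow> s \<rho> \<in> borel_measurable (P \<rho>)"
    and w_gauss: "\<And>\<rho>. \<rho> > 0 \<Longrightarrow> distributed (P \<rho>) lborel (w \<rho>) (\<lambda>x. ennreal (cn_density \<rho> x))"
    and n_gauss: "\<And>\<rho>. \<rho> > 0 \<Longrightarrow> distributed (P \<rho>) lborel (n \<rho>) (\<lambda>x. ennreal (cn_density N0 x))"
    and indep_wn: "\<And>\<rho>. \<rho> > 0 \<Longrightarrow> indep_rv (P \<rho>) (w \<rho>) (n \<rho>)"
    and indep_s: "\<And>\<rho>. \<rho> > 0 \<Longrightarrow>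
       indep_rv (P \<rho>) (s \<rho>) (\<lambda>\<omega>. (w \<rho> \<omega>, n \<rho> \<omega>))"
    and s_power_int: "\<And>\<rho> u. \<rho> > 0 \<Longrightarrow> integrable (P \<rho>) (\<lambda>\<omega>. (cmod (s \<rho> \<omega> $ u))\<^sup>2)"
    and s_power: "\<And>\<rho> u. \<rho> > 0 \<Longrightarrow> (\<integral>\<omega>. (cmod (s \<rho> \<omega> $ u))\<^sup>2 \<partial>P \<rho>) \<le> 1"
    and s_uncorr: "\<And>\<rho> u v. \<rho> > 0 \<Longrightarrow> u \<noteq> v \<Longrightarrow>
       (\<integral>\<omega>. s \<rho> \<omega> $ u * cnj (s \<rho> \<omega> $ v) \<partial>P \<rho>) = 0"
    and M_ge2: "\<And>\<rho>. \<rho> > 0 \<Longrightarrow> M \<rho> \<ge> 2"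
    and quant: "\<And>\<rho> c. \<rho> > 0 \<Longrightarrow> is_quantizer (Q \<rho> c) (M \<rho>)"
    and J_rows: "\<And>b. J $ b \<noteq> 0"
    and MI_lim: "\<exists>L :: ereal. L > 0 \<and>
       ((\<lambda>\<rho>. ereal (prob_space.mutual_information (P \<rho>) 2
          (count_space ((\<lambda>\<omega>. quantize (Q \<rho>) (rx_signal H J (s \<rho> \<omega>) (w \<rho> \<omega>) (n \<rho> \<omega>)))
                         ` space (P \<rho>)))
          borel
          (\<lambda>\<omega>. quantize (Q \<rho>) (rx_signal H J (s \<rho> \<omega>) (w \<rho> \<omega>) (n \<rho> \<omega>)))
          (s \<rho>))) \<longlongrightarrow> L) at_top"
  shows "\<not> (\<exists>\<epsilon>>0. ((\<lambda>\<rho>. real (M \<rho>) * \<rho> powr (\<epsilon> - 1/2)) \<longlongrightarrow> 0) at_top)"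
proof
  assume "\<exists>\<epsilon>>0. ((\<lambda>\<rho>. real (M \<rho>) * \<rho> powr (\<epsilon> - 1/2)) \<longlongrightarrow> 0) at_top"
  then obtain \<epsilon> where eps: "\<epsilon> > 0" and lim: "((\<lambda>\<rho>. real (M \<rho>) * \<rho> powr (\<epsilon> - 1/2)) \<longlongrightarrow> 0) at_top"
    by blast
  define MI where "MI = (\<lambda>\<rho>. prob_space.mutual_information (P \<rho>) 2
          (count_space ((\<lambda>\<omega>. quantize (Q \<rho>) (rx_signal H J (s \<rho> \<omega>) (w \<rho> \<omega>) (n \<rho> \<omega>)))
                         ` space (P \<rho>)))
          borel
          (\<lambda>\<omega>. quantize (Q \<rho>) (rx_signal H J (s \<rho> \<omega>) (w \<rho> \<omega>) (n \<rho> \<omega>)))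
          (s \<rho>))"
  obtain L :: ereal where L: "L > 0" "((\<lambda>\<rho>. ereal (MI \<rho>)) \<longlongrightarrow> L) at_top"
    using MI_lim unfolding MI_def by blast
  define B where "B = CARD('b)"
  have B1: "real B \<ge> 1" unfolding B_def by simp
  define C0 where "C0 = (\<Sum>c\<in>(UNIV :: ('b \<times> reim) set). 44 / norm (J $ fst c) * (\<Sum>u\<in>UNIV. cmod (H $ fst c $ u)))"
  have C0: "C0 \<ge> 0" unfolding C0_def by (intro sum_nonneg mult_nonneg_nonneg) auto
  define u where "u = (\<lambda>\<rho>::real. (\<rho> powr (- (2 * real B * \<epsilon>)) + 4 * C0 * real B * (ln \<rho> * \<rho> powr (- \<epsilon>))) / ln 2)"
  have u0: "(u \<longlongrightarrow> 0) at_top"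
  proof -
    have l1: "((\<lambda>x::real. x powr (- (2 * real B * \<epsilon>))) \<longlongrightarrow> 0) at_top"
      using eps B1 by real_asymp
    have l2: "((\<lambda>x::real. ln x * x powr (- \<epsilon>)) \<longlongrightarrow> 0) at_top"
      using eps by real_asymp
    have "((\<lambda>\<rho>::real. (\<rho> powr (- (2 * real B * \<epsilon>)) + 4 * C0 * real B * (ln \<rho> * \<rho> powr (- \<epsilon>))) / ln 2)
        \<longlongrightarrow> (0 + 4 * C0 * real B * 0) / ln 2) at_top"
      by (intro tendsto_intros l1 l2) simp
    then show ?thesis unfolding u_def by simp
  qed
  have MIb: "MI \<rho> \<le> (real (M \<rho>) ^ (2 * CARD('b)) * \<tau> + (- ln \<tau>) * (4 * (real (M \<rho>) * C0 / sqrt \<rho>))) / ln 2"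
    if r: "\<rho> > 0" and t: "0 < \<tau>" "\<tau> \<le> 1" for \<rho> \<tau>
  proof -
    interpret jam H J \<rho> "P \<rho>" "s \<rho>" "w \<rho>" "n \<rho>" "Q \<rho>" "M \<rho>" N0
      by (rule jam.intro) (simp_all add: r prob s_meas w_gauss n_gauss indep_wn indep_s s_power_int s_power M_ge2 quant J_rows)
    show ?thesis unfolding MI_def C0_def by (rule MI_final[OF t])
  qed
  have ev1: "eventually (\<lambda>\<rho>. real (M \<rho>) * \<rho> powr (\<epsilon> - 1/2) < 1) at_top"
    using order_tendstoD(2)[OF lim] by simp
  have ev: "eventually (\<lambda>\<rho>. MI \<rho> \<le> u \<rho>) at_top"
    using ev1 eventually_ge_at_top[of "1::real"]
  proof eventually_elim
    case (elim \<rho>)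
    then have r1: "\<rho> \<ge> 1" and r0: "\<rho> > 0" by auto
    define m where "m = real (M \<rho>)"
    have m0: "m \<ge> 0" unfolding m_def by simp
    have mle: "m \<le> \<rho> powr (1/2 - \<epsilon>)"
    proof -
      have "m * \<rho> powr (\<epsilon> - 1/2) < 1" using elim unfolding m_def by simp
      moreover have "\<rho> powr (\<epsilon> - 1/2) * \<rho> powr (1/2 - \<epsilon>) = 1" using r0 by (simp add: powr_add[symmetric])
      moreover have "\<rho> powr (1/2 - \<epsilon>) > 0" using r0 by simp
      ultimately have "m * \<rho> powr (\<epsilon> - 1/2) * \<rho> powr (1/2 - \<epsilon>) \<le> 1 * \<rho> powr (1/2 - \<epsilon>)"
        by (intro mult_right_mono) auto
      then show ?thesis using \<open>\<rho> powr (\<epsilon> - 1/2) * \<rho> powr (1/2 - \<epsilon>) = 1\<close> by (simp add: mult.assoc)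
    qed
    define \<tau> where "\<tau> = \<rho> powr (- real B)"
    have tau: "0 < \<tau>" "\<tau> \<le> 1" unfolding \<tau>_def using r1 r0 B1 by (auto simp: powr_le_one_le ge_one_powr_ge_zero powr_minus_divide)
    have lnt: "- ln \<tau> = real B * ln \<rho>" unfolding \<tau>_def using r0 by (simp add: ln_powr)
    have "MI \<rho> \<le> (m ^ (2 * CARD('b)) * \<tau> + (- ln \<tau>) * (4 * (m * C0 / sqrt \<rho>))) / ln 2"
      unfolding m_def by (rule MIb[OF r0 tau])
    also have "\<dots> \<le> u \<rho>"
    proof -
      have a: "m ^ (2 * CARD('b)) * \<tau> \<le> \<rho> powr (- (2 * real B * \<epsilon>))"
      proof -
        have "m ^ (2 * CARD('b)) \<le> (\<rho> powr (1/2 - \<epsilon>)) ^ (2 * B)"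
          unfolding B_def by (intro power_mono mle m0)
        also have "\<dots> = \<rho> powr ((1/2 - \<epsilon>) * real (2 * B))" using r0 by (simp add: powr_realpow[symmetric] powr_powr)
        finally have "m ^ (2 * CARD('b)) * \<tau> \<le> \<rho> powr ((1/2 - \<epsilon>) * real (2 * B)) * \<rho> powr (- real B)"
          unfolding \<tau>_def by (intro mult_right_mono) auto
        also have "\<dots> = \<rho> powr (- (2 * real B * \<epsilon>))" using r0
          by (simp add: powr_add[symmetric] algebra_simps)
        finally show ?thesis .
      qed
      have b: "m / sqrt \<rho> \<le> \<rho> powr (- \<epsilon>)"
      proof -
        have "sqrt \<rho> = \<rho> powr (1/2)" using r0 by (simp add: powr_half_sqrt)
        then have "m / sqrt \<rho> \<le> \<rho> powr (1/2 - \<epsilon>) / \<rho> powr (1/2)"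
          using mle r0 by (simp add: divide_right_mono)
        also have "\<dots> = \<rho> powr (- \<epsilon>)" using r0 by (simp add: powr_diff[symmetric])
        finally show ?thesis .
      qed
      have lnr: "ln \<rho> \<ge> 0" using r1 by simp
      have "(- ln \<tau>) * (4 * (m * C0 / sqrt \<rho>)) = 4 * C0 * real B * ln \<rho> * (m / sqrt \<rho>)"
        unfolding lnt by (simp add: algebra_simps)
      also have "\<dots> \<le> 4 * C0 * real B * ln \<rho> * \<rho> powr (- \<epsilon>)"
        using C0 B1 lnr b by (intro mult_left_mono) auto
      finally have c: "(- ln \<tau>) * (4 * (m * C0 / sqrt \<rho>)) \<le> 4 * C0 * real B * (ln \<rho> * \<rho> powr (- \<epsilon>))"
        by (simp add: mult.assoc)
      show ?thesis unfolding u_def using a c by (intro divide_right_mono) auto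
    qed
    finally show ?case .
  qed
  have "L \<le> ereal 0"
  proof (rule tendsto_le[OF trivial_limit_at_top_linorder _ L(2)])
    show "((\<lambda>\<rho>. ereal (u \<rho>)) \<longlongrightarrow> ereal 0) at_top" using u0 by (simp add: lim_ereal)
    show "\<forall>\<^sub>F \<rho> in at_top. ereal (MI \<rho>) \<le> ereal (u \<rho>)" using ev by simp
  qed
  then have "L \<le> 0" by (simp add: zero_ereal_def)
  then show False using L(1) by simp
qed


end
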